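(* Let $\mathcal N=(\mathcal S,\mathcal C,\mathcal R)$ be a chemical reaction network, $k\in\mathbb R^r_{>0}$, and $\mathcal M=(\mathcal S,\mathcal C,\mathcal R,k)$ the associated mass action system. Let $\tilde{\mathcal N}=(\mathcal S,\tilde{\mathcal C},\mathcal{CR}_K,\tilde{\mathcal R})$ be an improper translation of $\mathcal N$ which is strongly resolvable and has structural deficiency $\tilde\delta=0$, and let $\tilde{\mathcal M}=(\mathcal S,\tilde{\mathcal C},\mathcal{CR}_K,\tilde{\mathcal R},\tilde k)$ be the improperly translated mass action system. Then the (positive) steady states of the system governing $\tilde{\mathcal M}$ coincide with those of the system governing $\mathcal M$.
   Context: A chemical reaction network $\mathcal N=(\mathcal S,\mathcal C,\mathcal R)$ consists of species $\mathcal A_1,\dots,\mathcal A_m$, pairwise distinct complexes $\mathcal C_1,\dots,\mathcal C_n$ with stoichiometric vectors $y_1,\dots,y_n\in\mathbb Z^m_{\ge 0}$, and reactions $\mathcal R_1,\dots,\mathcal R_r$, where $\mathcal R_i$ is $\mathcal C_{\rho(i)}\to\mathcal C_{\rho'(i)}$ with $\rho(i)\neq\rho'(i)$; every species appears in some complex and every complex in some reaction. Complexes and reactions are identified with their indices; $\mathcal{CR}=\{\rho(i)\}$ is the reactant complex set; $\mathbf x^{y}=\prod_j x_j^{y_j}$. The mass action system $\mathcal M=(\mathcal S,\mathcal C,\mathcal R,k)$ is $\dot{\mathbf x}=\sum_{i}k_i(y_{\rho'(i)}-y_{\rho(i)})\mathbf x^{y_{\rho(i)}}$ on $\mathbb R^m_{>0}$;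 steady states are taken in $\mathbb R^m_{>0}$. Linkage classes are connected components of the underlying undirected reaction graph; weakly reversible means every reaction $\mathcal C_a\to\mathcal C_b$ admits a directed path from $\mathcal C_b$ back to $\mathcal C_a$. A translation $\tilde{\mathcal N}=(\mathcal S,\tilde{\mathcal C},\mathcal{CR}_K,\tilde{\mathcal R})$ of $\mathcal N$: $(\mathcal S,\tilde{\mathcal C},\tilde{\mathcal R})$ is a chemical reaction network with complexes $\tilde{\mathcal C}_1,\dots,\tilde{\mathcal C}_{\tilde n}$ (vectors $\tilde y_j$), reactions $\tilde{\mathcal R}_l:\tilde{\mathcal C}_{\tilde\rho(l)}\to\tilde{\mathcal C}_{\tilde\rho'(l)}$, reactant complex set $\tilde{\mathcal{CR}}$, and $\mathcal{CR}_K\subseteq\mathcal{CR}$, such that (1) there is a bijection $h_1:\mathcal R\to\tilde{\mathcal R}$ preserving reaction vectors: $\tilde y_{\tilde\rho'(h_1(i))}-\tilde y_{\tilde\rho(h_1(i))}=y_{\rho'(i)}-y_{\rho(i)}$; (2) there is a surjection $h_2:\mathcal{CR}\to\tilde{\mathcal{CR}}$ with $h_2(\rho(i))=\tilde\rho(h_1(i))$; (3) for each $j\in\tilde{\mathcal{CR}}$, $\mathcal{CR}_K$ contains exactly one element $\kappa(j)$ of $h_2^{-1}(j)$, the kinetic complex of $\tilde{\mathcal C}_j$ (non-reactant complexes get arbitrary kinetic complexes in $\mathcal{CR}_K$). It is improper if $h_2$ is not injective, strong if $\tilde{\mathcal N}$ is weakly reversible. Kinetic-order subspace: $\tilde S=\mathrm{span}\{y_{\kappa(\tilde\rho'(l))}-y_{\kappa(\tilde\rho(l))}\}$.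 Structural deficiency: $\tilde\delta=\dim(\ker\tilde Y\cap\mathrm{Im}\,\tilde I_a)$, where $\tilde Y$ has columns $\tilde y_j$ and $\tilde I_a\in\mathbb Z^{\tilde n\times r}$ has, in the column of reaction $\tilde{\mathcal R}_l$, entry $-1$ in row $\tilde\rho(l)$, $+1$ in row $\tilde\rho'(l)$, and $0$ elsewhere. Improper reactions: $\mathcal R_I=\{i:\rho(i)\in\mathcal{CR}\setminus\mathcal{CR}_K\}$; $\rho(i)_K$ is the unique element of $h_2^{-1}(h_2(\rho(i)))\cap\mathcal{CR}_K$. $\tilde S_I=\mathrm{span}\{y_{\rho(i)}-y_{\rho(i)_K}:i\in\mathcal R_I\}$. Weakly resolvable: $\tilde{\mathcal N}$ strong and $\tilde S_I\subseteq\tilde S$. In that case fix a basis $\{y_{p_j}-y_{q_j}\}_{j=1}^{\tilde s}$ of $\tilde S$ with $p_j,q_j\in\mathcal{CR}_K$ and $h_2(p_j),h_2(q_j)$ in the same linkage class of $\tilde{\mathcal N}$, and for $i\in\mathcal R_I$ let $c^{(i)}_j$ be the coordinates: $y_{\rho(i)}-y_{\rho(i)_K}=\sum_j c^{(i)}_j(y_{p_j}-y_{q_j})$. Tree constants: for a weakly reversible directed graph with edge weights, a spanning $a$-tree is a subgraph spanning the linkage class of vertex $a$, with no cycles, and with $a$ as unique sink; the tree constant of $a$ is the sum over spanning $a$-trees of the product of their edge weights. The semi-proper reaction graph of $\tilde{\mathcal N}$ is its reaction graph with edge $h_1(i)$ weighted $k_i$ if $i\notin\mathcal R_I$ and by an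 indeterminate positive $\tilde k_i$ if $i\in\mathcal R_I$; let $\tilde K_a$ be its tree constants (polynomials in these weights). The strong kinetic adjustment factor of $i\in\mathcal R_I$ is $\tilde K_{\rho(i),\rho(i)_K}=\prod_j(\tilde K_{h_2(p_j)}/\tilde K_{h_2(q_j)})^{c^{(i)}_j}$. $\tilde{\mathcal N}$ is strongly resolvable if it is weakly resolvable and, for every $i\in\mathcal R_I$, $\tilde K_{\rho(i),\rho(i)_K}$ does not depend on any $\tilde k_{j}$, $j\in\mathcal R_I$. The improperly translated mass action system $\tilde{\mathcal M}$ is the generalized mass action system $\dot{\mathbf x}=\sum_l\tilde k_l(\tilde y_{\tilde\rho'(l)}-\tilde y_{\tilde\rho(l)})\mathbf x^{y_{\kappa(\tilde\rho(l))}}$ with rate constants $\tilde k_{h_1(i)}=k_i$ for $i\notin\mathcal R_I$ and $\tilde k_{h_1(i)}=\tilde K_{\rho(i),\rho(i)_K}\,k_i$ for $i\in\mathcal R_I$. *)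

theory Defs
  imports "HOL-Analysis.Analysis" "HOL-Library.Function_Algebras"
begin

text \<open>Species are indexed by 0..<m, complexes by 0..<n, reactions by 0..<r.
  A stoichiometric vector is a function nat => nat (only the entries below m matter).
  Vectors in R^m (resp. R^n) are represented as functions nat => real; linear algebra
  on them is done with the vector space structure given by pointwise scaling fscale.\<close>

definition fscale :: "real \<Rightarrow> (nat \<Rightarrow> real) \<Rightarrow> nat \<Rightarrow> real" where
  "fscale c f = (\<lambda>x. c * f x)"

lemma vector_space_fscale: "vector_space fscale"
  by unfold_locales (auto simp: fscale_def algebra_simps fun_eq_iff)

abbreviation fspan :: "(nat \<Rightarrow> real) set \<Rightarrow> (nat \<Rightarrow> real) set" where
  "fspan \<equiv> module.span fscale"

abbreviation findependent :: "(nat \<Rightarrow> real) set \<Rightarrow> bool" where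
  "findependent A \<equiv> \<not> module.dependent fscale A"

abbreviation fdim :: "(nat \<Rightarrow> real) set \<Rightarrow> nat" where
  "fdim \<equiv> vector_space.dim fscale"

definition cvec :: "nat \<Rightarrow> (nat \<Rightarrow> nat) \<Rightarrow> nat \<Rightarrow> real" where
  "cvec m v = (\<lambda>s. if s < m then real (v s) else 0)"

definition monom :: "nat \<Rightarrow> (nat \<Rightarrow> real) \<Rightarrow> (nat \<Rightarrow> nat) \<Rightarrow> real" where
  "monom m x v = (\<Prod>s<m. x s ^ v s)"

text \<open>Chemical reaction network with m species, n complexes (vectors y 0..y (n-1)),
  r reactions, reaction i being complex rho i -> complex rho' i.\<close>
definition is_crn :: "nat \<Rightarrow> nat \<Rightarrow> nat \<Rightarrow> (nat \<Rightarrow> nat \<Rightarrow> nat) \<Rightarrow> (nat \<Rightarrow> nat) \<Rightarrow> (nat \<Rightarrow> nat) \<Rightarrow> bool" where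
  "is_crn m n r y rho rho' \<longleftrightarrow>
     (\<forall>i<r. rho i < n \<and> rho' i < n \<and> rho i \<noteq> rho' i) \<and>
     (\<forall>a<n. \<forall>b<n. a \<noteq> b \<longrightarrow> (\<exists>s<m. y a s \<noteq> y b s)) \<and>
     (\<forall>s<m. \<exists>j<n. y j s > 0) \<and>
     (\<forall>j<n. \<exists>i<r. rho i = j \<or> rho' i = j)"

definition reactant_set :: "nat \<Rightarrow> (nat \<Rightarrow> nat) \<Rightarrow> nat set" where
  "reactant_set r rho = rho ` {..<r}"

definition mas_rhs :: "nat \<Rightarrow> nat \<Rightarrow> (nat \<Rightarrow> nat \<Rightarrow> nat) \<Rightarrow> (nat \<Rightarrow> nat) \<Rightarrow> (nat \<Rightarrow> nat)
    \<Rightarrow> (nat \<Rightarrow> real) \<Rightarrow> (nat \<Rightarrow> real) \<Rightarrow> nat \<Rightarrow> real" where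
  "mas_rhs m r y rho rho' k x = (\<lambda>s. \<Sum>i<r. k i * (real (y (rho' i) s) - real (y (rho i) s)) * monom m x (y (rho i)))"

definition pos_steady_states :: "nat \<Rightarrow> ((nat \<Rightarrow> real) \<Rightarrow> nat \<Rightarrow> real) \<Rightarrow> (nat \<Rightarrow> real) set" where
  "pos_steady_states m F = {x. (\<forall>s<m. x s > 0) \<and> (\<forall>s<m. F x s = 0)}"

definition edge_rel :: "nat set \<Rightarrow> (nat \<Rightarrow> nat) \<Rightarrow> (nat \<Rightarrow> nat) \<Rightarrow> (nat \<times> nat) set" where
  "edge_rel E rho rho' = {(rho l, rho' l) | l. l \<in> E}"

definition weakly_reversible :: "nat \<Rightarrow> (nat \<Rightarrow> nat) \<Rightarrow> (nat \<Rightarrow> nat) \<Rightarrow> bool" where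
  "weakly_reversible r rho rho' \<longleftrightarrow>
     (\<forall>l<r. (rho' l, rho l) \<in> (edge_rel {..<r} rho rho')\<^sup>*)"

definition linkage_class :: "nat \<Rightarrow> (nat \<Rightarrow> nat) \<Rightarrow> (nat \<Rightarrow> nat) \<Rightarrow> nat \<Rightarrow> nat set" where
  "linkage_class r rho rho' a =
     {b. (a, b) \<in> (edge_rel {..<r} rho rho' \<union> (edge_rel {..<r} rho rho')\<inverse>)\<^sup>*}"

definition has_cycle :: "nat set \<Rightarrow> (nat \<Rightarrow> nat) \<Rightarrow> (nat \<Rightarrow> nat) \<Rightarrow> bool" where
  "has_cycle T rho rho' \<longleftrightarrow>
     (\<exists>es vs. length es = length vs \<and> length es \<ge> 2 \<and> distinct es \<and> distinct vs \<and> set es \<subseteq> T \<and>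
        (\<forall>i<length es. {rho (es ! i), rho' (es ! i)} = {vs ! i, vs ! ((i + 1) mod length es)}))"

definition spanning_tree :: "nat \<Rightarrow> (nat \<Rightarrow> nat) \<Rightarrow> (nat \<Rightarrow> nat) \<Rightarrow> nat \<Rightarrow> nat set \<Rightarrow> bool" where
  "spanning_tree r rho rho' a T \<longleftrightarrow>
     T \<subseteq> {..<r} \<and>
     (\<forall>l\<in>T. rho l \<in> linkage_class r rho rho' a \<and> rho' l \<in> linkage_class r rho rho' a) \<and>
     (\<forall>v\<in>linkage_class r rho rho' a. (a, v) \<in> (edge_rel T rho rho' \<union> (edge_rel T rho rho')\<inverse>)\<^sup>*) \<and>
     \<not> has_cycle T rho rho' \<and>
     (\<forall>l\<in>T. rho l \<noteq> a) \<and>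
     (\<forall>v\<in>linkage_class r rho rho' a. v \<noteq> a \<longrightarrow> (\<exists>l\<in>T. rho l = v))"

definition tree_const :: "nat \<Rightarrow> (nat \<Rightarrow> nat) \<Rightarrow> (nat \<Rightarrow> nat) \<Rightarrow> (nat \<Rightarrow> real) \<Rightarrow> nat \<Rightarrow> real" where
  "tree_const r rho rho' u a = (\<Sum>T\<in>{T. spanning_tree r rho rho' a T}. \<Prod>l\<in>T. u l)"

definition incidence_col :: "(nat \<Rightarrow> nat) \<Rightarrow> (nat \<Rightarrow> nat) \<Rightarrow> nat \<Rightarrow> nat \<Rightarrow> real" where
  "incidence_col rho rho' l = (\<lambda>j. (if j = rho' l then 1 else 0) - (if j = rho l then 1 else 0))"

definition kerY :: "nat \<Rightarrow> nat \<Rightarrow> (nat \<Rightarrow> nat \<Rightarrow> nat) \<Rightarrow> (nat \<Rightarrow> real) set" where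
  "kerY m n y = {v. (\<forall>j. n \<le> j \<longrightarrow> v j = 0) \<and> (\<forall>s<m. (\<Sum>j<n. v j * real (y j s)) = 0)}"

definition struct_deficiency :: "nat \<Rightarrow> nat \<Rightarrow> nat \<Rightarrow> (nat \<Rightarrow> nat \<Rightarrow> nat) \<Rightarrow> (nat \<Rightarrow> nat) \<Rightarrow> (nat \<Rightarrow> nat) \<Rightarrow> nat" where
  "struct_deficiency m n r y rho rho' =
     fdim (kerY m n y \<inter> fspan (incidence_col rho rho' ` {..<r}))"

text \<open>Translation (nt, ty, trho, trho') of (m, n, r, y, rho, rho') with bijection h1 on reaction
  indices, map h2 on reactant complexes, kinetic complex set CRK, and kinetic complex map kap
  (kap j is the kinetic complex of translated complex j).\<close>
definition is_translation :: "nat \<Rightarrow> nat \<Rightarrow> nat \<Rightarrow> (nat \<Rightarrow> nat \<Rightarrow> nat) \<Rightarrow> (nat \<Rightarrow> nat) \<Rightarrow> (nat \<Rightarrow> nat)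
   \<Rightarrow> nat \<Rightarrow> (nat \<Rightarrow> nat \<Rightarrow> nat) \<Rightarrow> (nat \<Rightarrow> nat) \<Rightarrow> (nat \<Rightarrow> nat)
   \<Rightarrow> (nat \<Rightarrow> nat) \<Rightarrow> (nat \<Rightarrow> nat) \<Rightarrow> nat set \<Rightarrow> (nat \<Rightarrow> nat) \<Rightarrow> bool" where
  "is_translation m n r y rho rho' nt ty trho trho' h1 h2 CRK kap \<longleftrightarrow>
     is_crn m nt r ty trho trho' \<and>
     bij_betw h1 {..<r} {..<r} \<and>
     (\<forall>i<r. \<forall>s<m. int (ty (trho' (h1 i)) s) - int (ty (trho (h1 i)) s)
                  = int (y (rho' i) s) - int (y (rho i) s)) \<and>
     h2 ` reactant_set r rho = reactant_set r trho \<and>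
     (\<forall>i<r. h2 (rho i) = trho (h1 i)) \<and>
     CRK \<subseteq> reactant_set r rho \<and>
     (\<forall>j\<in>reactant_set r trho. {c \<in> reactant_set r rho. h2 c = j} \<inter> CRK = {kap j}) \<and>
     (\<forall>j<nt. kap j \<in> CRK)"

definition improper_reactions :: "nat \<Rightarrow> (nat \<Rightarrow> nat) \<Rightarrow> nat set \<Rightarrow> nat set" where
  "improper_reactions r rho CRK = {i. i < r \<and> rho i \<notin> CRK}"

definition kin_order_space :: "nat \<Rightarrow> nat \<Rightarrow> (nat \<Rightarrow> nat \<Rightarrow> nat) \<Rightarrow> (nat \<Rightarrow> nat) \<Rightarrow> (nat \<Rightarrow> nat)
    \<Rightarrow> (nat \<Rightarrow> nat) \<Rightarrow> (nat \<Rightarrow> real) set" where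
  "kin_order_space m r y kap trho trho' =
     fspan {cvec m (y (kap (trho' l))) - cvec m (y (kap (trho l))) | l. l < r}"

definition improper_vec :: "nat \<Rightarrow> (nat \<Rightarrow> nat \<Rightarrow> nat) \<Rightarrow> (nat \<Rightarrow> nat) \<Rightarrow> (nat \<Rightarrow> nat) \<Rightarrow> (nat \<Rightarrow> nat) \<Rightarrow> nat \<Rightarrow> nat \<Rightarrow> real" where
  "improper_vec m y rho h2 kap i = cvec m (y (rho i)) - cvec m (y (kap (h2 (rho i))))"

definition weakly_resolvable :: "nat \<Rightarrow> nat \<Rightarrow> (nat \<Rightarrow> nat \<Rightarrow> nat) \<Rightarrow> (nat \<Rightarrow> nat) \<Rightarrow> (nat \<Rightarrow> nat)
    \<Rightarrow> (nat \<Rightarrow> nat) \<Rightarrow> (nat \<Rightarrow> nat) \<Rightarrow> nat set \<Rightarrow> (nat \<Rightarrow> nat) \<Rightarrow> bool" where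
  "weakly_resolvable m r y rho trho trho' h2 CRK kap \<longleftrightarrow>
     weakly_reversible r trho trho' \<and>
     fspan (improper_vec m y rho h2 kap ` improper_reactions r rho CRK) \<subseteq> kin_order_space m r y kap trho trho'"

definition adapted_basis :: "nat \<Rightarrow> nat \<Rightarrow> (nat \<Rightarrow> nat \<Rightarrow> nat) \<Rightarrow> (nat \<Rightarrow> nat) \<Rightarrow> (nat \<Rightarrow> nat) \<Rightarrow> (nat \<Rightarrow> nat)
    \<Rightarrow> (nat \<Rightarrow> nat) \<Rightarrow> nat set \<Rightarrow> (nat \<Rightarrow> nat)
    \<Rightarrow> nat \<Rightarrow> (nat \<Rightarrow> nat) \<Rightarrow> (nat \<Rightarrow> nat) \<Rightarrow> (nat \<Rightarrow> nat \<Rightarrow> real) \<Rightarrow> bool" where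
  "adapted_basis m r y rho trho trho' h2 CRK kap sd p q c \<longleftrightarrow>
     (\<forall>j<sd. p j \<in> CRK \<and> q j \<in> CRK \<and> h2 (q j) \<in> linkage_class r trho trho' (h2 (p j))) \<and>
     inj_on (\<lambda>j. cvec m (y (p j)) - cvec m (y (q j))) {..<sd} \<and>
     findependent ((\<lambda>j. cvec m (y (p j)) - cvec m (y (q j))) ` {..<sd}) \<and>
     fspan ((\<lambda>j. cvec m (y (p j)) - cvec m (y (q j))) ` {..<sd}) = kin_order_space m r y kap trho trho' \<and>
     (\<forall>i\<in>improper_reactions r rho CRK.
        improper_vec m y rho h2 kap i = (\<Sum>j<sd. fscale (c i j) (cvec m (y (p j)) - cvec m (y (q j)))))"

definition semi_proper_weights :: "nat \<Rightarrow> (nat \<Rightarrow> nat) \<Rightarrow> nat set \<Rightarrow> (nat \<Rightarrow> real) \<Rightarrow> (nat \<Rightarrow> real) \<Rightarrow> bool" where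
  "semi_proper_weights r rho CRK k W \<longleftrightarrow>
     (\<forall>i<r. i \<notin> improper_reactions r rho CRK \<longrightarrow> W i = k i) \<and>
     (\<forall>i\<in>improper_reactions r rho CRK. W i > 0)"

text \<open>Strong kinetic adjustment factor of reaction i, evaluated at semi-proper weights W;
  edge h1 i of the translated graph carries weight W i.\<close>
definition adj_factor :: "nat \<Rightarrow> (nat \<Rightarrow> nat) \<Rightarrow> (nat \<Rightarrow> nat) \<Rightarrow> (nat \<Rightarrow> nat) \<Rightarrow> (nat \<Rightarrow> nat)
    \<Rightarrow> nat \<Rightarrow> (nat \<Rightarrow> nat) \<Rightarrow> (nat \<Rightarrow> nat) \<Rightarrow> (nat \<Rightarrow> nat \<Rightarrow> real) \<Rightarrow> (nat \<Rightarrow> real) \<Rightarrow> nat \<Rightarrow> real" where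
  "adj_factor r trho trho' h1 h2 sd p q c W i =
     (let u = (\<lambda>l. W (the_inv_into {..<r} h1 l)) in
      \<Prod>j<sd. (tree_const r trho trho' u (h2 (p j)) / tree_const r trho trho' u (h2 (q j))) powr (c i j))"

definition strongly_resolvable where
  "strongly_resolvable m r y rho trho trho' h1 h2 CRK kap sd p q c k \<longleftrightarrow>
     weakly_resolvable m r y rho trho trho' h2 CRK kap \<and>
     (\<forall>i\<in>improper_reactions r rho CRK. \<forall>W W'.
        semi_proper_weights r rho CRK k W \<and> semi_proper_weights r rho CRK k W' \<longrightarrow>
        adj_factor r trho trho' h1 h2 sd p q c W i = adj_factor r trho trho' h1 h2 sd p q c W' i)"

text \<open>Rate constants of the improperly translated mass action system (indexed by translated
  reactions l = h1 i). Since the factor does not depend on the free weights, it is evaluated at W = k.\<close>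
definition translated_rates where
  "translated_rates r rho trho trho' h1 h2 CRK sd p q c k =
     (\<lambda>l. let i = the_inv_into {..<r} h1 l in
          if i \<in> improper_reactions r rho CRK
          then adj_factor r trho trho' h1 h2 sd p q c k i * k i else k i)"

definition gmas_rhs :: "nat \<Rightarrow> nat \<Rightarrow> (nat \<Rightarrow> nat \<Rightarrow> nat) \<Rightarrow> (nat \<Rightarrow> nat \<Rightarrow> nat) \<Rightarrow> (nat \<Rightarrow> nat) \<Rightarrow> (nat \<Rightarrow> nat)
    \<Rightarrow> (nat \<Rightarrow> nat) \<Rightarrow> (nat \<Rightarrow> real) \<Rightarrow> (nat \<Rightarrow> real) \<Rightarrow> nat \<Rightarrow> real" where
  "gmas_rhs m r y ty trho trho' kap kt x =
     (\<lambda>s. \<Sum>l<r. kt l * (real (ty (trho' l) s) - real (ty (trho l) s)) * monom m x (y (kap (trho l))))"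

end

theory Submission
  imports Defs
begin

lemma mem_edge_rel: "(a, b) \<in> edge_rel T src tgt \<longleftrightarrow> (\<exists>l\<in>T. a = src l \<and> b = tgt l)"
  unfolding edge_rel_def by auto

lemma edge_rel_mono: "T \<subseteq> T' \<Longrightarrow> edge_rel T src tgt \<subseteq> edge_rel T' src tgt"
  unfolding edge_rel_def by auto

lemma rtrancl_edge_mono: "T \<subseteq> T' \<Longrightarrow> (a,b) \<in> (edge_rel T src tgt)\<^sup>* \<Longrightarrow> (a,b) \<in> (edge_rel T' src tgt)\<^sup>*"
  using rtrancl_mono[OF edge_rel_mono] by blast

lemma mk_cycle:
  fixes d :: nat and V Ed src tgt :: "nat \<Rightarrow> nat"
  assumes "d \<ge> 2" "inj_on V {..<d}" "inj_on Ed {..<d}"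
    and "\<forall>t<d. Ed t \<in> T \<and> {src (Ed t), tgt (Ed t)} = {V t, V ((t+1) mod d)}"
  shows "has_cycle T src tgt"
proof -
  have "length (map Ed [0..<d]) = length (map V [0..<d]) \<and> length (map Ed [0..<d]) \<ge> 2 \<and>
    distinct (map Ed [0..<d]) \<and> distinct (map V [0..<d]) \<and> set (map Ed [0..<d]) \<subseteq> T \<and>
    (\<forall>i<length (map Ed [0..<d]). {src (map Ed [0..<d] ! i), tgt (map Ed [0..<d] ! i)} =
         {map V [0..<d] ! i, map V [0..<d] ! ((i + 1) mod length (map Ed [0..<d]))})"
  proof (intro conjI)
    show "\<forall>i<length (map Ed [0..<d]). {src (map Ed [0..<d] ! i), tgt (map Ed [0..<d] ! i)} =
         {map V [0..<d] ! i, map V [0..<d] ! ((i + 1) mod length (map Ed [0..<d]))}"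
    proof (intro allI impI)
      fix i assume "i < length (map Ed [0..<d])"
      then have i: "i < d" by simp
      have m: "(i + 1) mod d < d" using assms(1) by simp
      show "{src (map Ed [0..<d] ! i), tgt (map Ed [0..<d] ! i)} =
         {map V [0..<d] ! i, map V [0..<d] ! ((i + 1) mod length (map Ed [0..<d]))}"
        using assms(4) i m by (simp del: upt_Suc)
    qed
  qed (use assms in \<open>auto simp add: distinct_map atLeast0LessThan simp del: upt_Suc\<close>)
  then show ?thesis unfolding has_cycle_def by blast
qed

lemma rtrancl_avoid:
  assumes "(x, y) \<in> R\<^sup>*"
  shows "(x, y) \<in> {(a,b). (a,b) \<in> R \<and> a \<noteq> y}\<^sup>*"
  using assms
proof (induct rule: converse_rtrancl_induct)
  case base then show ?case by simp
next
  case (step a b)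
  show ?case
  proof (cases "a = y")
    case True then show ?thesis by simp
  next
    case False
    then have "(a,b) \<in> {(a,b). (a,b) \<in> R \<and> a \<noteq> y}" using step by auto
    then show ?thesis using step by (meson converse_rtrancl_into_rtrancl)
  qed
qed

lemma walk_least:
  fixes A :: nat and g :: "'a \<Rightarrow> 'a"
  assumes "(g^^A) x = a" and "\<forall>t<A. (g^^t) x \<noteq> a"
  shows "inj_on (\<lambda>t. (g^^t) x) {..A}"
proof (rule inj_onI, rule ccontr)
  fix i j assume ij: "i \<in> {..A}" "j \<in> {..A}" "(g^^i) x = (g^^j) x" "i \<noteq> j"
  { fix i j assume ij: "i \<le> A" "j \<le> A" "(g^^i) x = (g^^j) x" "i < j"
    have "(g^^(A - j + i)) x = (g^^(A - j)) ((g^^i) x)" by (simp add: funpow_add)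
    also have "\<dots> = (g^^(A - j)) ((g^^j) x)" using ij by simp
    also have "\<dots> = (g^^(A - j + j)) x" by (simp only: funpow_add o_apply)
    also have "\<dots> = (g^^A) x" using ij by simp
    finally have e: "(g^^(A - j + i)) x = a" using assms(1) by simp
    have "A - j + i < A" using ij by simp
    then have False using assms(2) e by blast
  } note H = this
  show False
  proof (cases "i < j")
    case True then show ?thesis using H[of i j] ij by auto
  next
    case False then have "j < i" using ij by simp
    then show ?thesis using H[of j i] ij by auto
  qed
qed

lemma walk_loop:
  fixes A i :: nat and g :: "'a \<Rightarrow> 'a"
  assumes "(g^^A) x = a" and "\<forall>t<A. (g^^t) x \<noteq> a" and "i \<le> A" "(g^^i) x = v" "g v = x"
  shows "v = a"
proof (rule ccontr)
  assume "v \<noteq> a"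
  then have "i < A" using assms by (metis le_neq_implies_less)
  have s: "(g^^(Suc i)) x = x" using assms by simp
  have "(g^^(A - Suc i)) x = (g^^(A - Suc i)) ((g^^(Suc i)) x)" using s by simp
  also have "\<dots> = (g^^(A - Suc i + Suc i)) x" by (simp only: funpow_add o_apply)
  also have "\<dots> = (g^^A) x" using \<open>i < A\<close> by simp
  finally show False using assms(1,2) \<open>i < A\<close> by simp
qed

locale rg =
  fixes r :: nat and src tgt :: "nat \<Rightarrow> nat"
  assumes noloop: "\<And>l. l < r \<Longrightarrow> src l \<noteq> tgt l"
begin

abbreviation E where "E \<equiv> edge_rel {..<r} src tgt"
abbreviation cls where "cls a \<equiv> linkage_class r src tgt a"

lemma cls_self: "a \<in> cls a" by (simp add: linkage_class_def)

lemma cls_sym: assumes "b \<in> cls a" shows "a \<in> cls b"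
proof -
  let ?S = "E \<union> E\<inverse>"
  have "(a,b) \<in> ?S\<^sup>*" using assms by (simp add: linkage_class_def)
  then have "(b,a) \<in> (?S\<inverse>)\<^sup>*" by (simp add: rtrancl_converse)
  moreover have "?S\<inverse> = ?S" by auto
  ultimately show ?thesis by (simp add: linkage_class_def)
qed

lemma cls_trans: "b \<in> cls a \<Longrightarrow> c \<in> cls b \<Longrightarrow> c \<in> cls a"
  unfolding linkage_class_def mem_Collect_eq by (rule rtrancl_trans)

lemma cls_eq: assumes "b \<in> cls a" shows "cls b = cls a"
proof
  show "cls b \<subseteq> cls a" using cls_trans[OF assms] by blast
  have "a \<in> cls b" using cls_sym[OF assms] .
  then show "cls a \<subseteq> cls b" using cls_trans by blast
qed

lemma cls_edge1: assumes "l < r" "src l \<in> cls a" shows "tgt l \<in> cls a"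
proof -
  have "(src l, tgt l) \<in> E" unfolding edge_rel_def using assms by auto
  then have "tgt l \<in> cls (src l)" by (auto simp: linkage_class_def)
  then show ?thesis using assms cls_trans by blast
qed

lemma cls_edge2: assumes "l < r" "tgt l \<in> cls a" shows "src l \<in> cls a"
proof -
  have "(src l, tgt l) \<in> E" unfolding edge_rel_def using assms by auto
  then have "src l \<in> cls (tgt l)" by (auto simp: linkage_class_def)
  then show ?thesis using assms cls_trans by blast
qed

lemma cls_sub: "cls a \<subseteq> insert a (src ` {..<r} \<union> tgt ` {..<r})"
proof
  fix b assume "b \<in> cls a"
  then have "(a, b) \<in> (E \<union> E\<inverse>)\<^sup>*" by (simp add: linkage_class_def)
  then show "b \<in> insert a (src ` {..<r} \<union> tgt ` {..<r})"
  proof (cases rule: rtranclE)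
    case base then show ?thesis by simp
  next
    case (step c)
    then have "(c, b) \<in> E \<or> (b, c) \<in> E" by simp
    then obtain l where "l < r" "b = src l \<or> b = tgt l" unfolding edge_rel_def by blast
    then show ?thesis by blast
  qed
qed

lemma cls_finite: "finite (cls a)"
  using cls_sub finite_subset by blast

end

context rg
begin

definition ft where
  "ft a T \<longleftrightarrow> T \<subseteq> {..<r} \<and> (\<forall>l\<in>T. src l \<in> cls a \<and> tgt l \<in> cls a) \<and> (\<forall>l\<in>T. src l \<noteq> a) \<and>
     (\<forall>v\<in>cls a. v \<noteq> a \<longrightarrow> (\<exists>!l. l \<in> T \<and> src l = v)) \<and>
     (\<forall>v\<in>cls a. (v, a) \<in> (edge_rel T src tgt)\<^sup>*)"

lemma walk_in:
  assumes sg: "\<forall>v\<in>cls a - {a}. sg v \<in> T \<and> src (sg v) = v \<and> tgt (sg v) \<in> cls a"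
    and x: "x \<in> cls a"
  shows "(\<forall>s<t. ((\<lambda>v. tgt (sg v))^^s) x \<noteq> a) \<longrightarrow>
    ((\<lambda>v. tgt (sg v))^^t) x \<in> cls a \<and> (x, ((\<lambda>v. tgt (sg v))^^t) x) \<in> (edge_rel T src tgt)\<^sup>*"
proof (induct t)
  case 0 then show ?case using x by simp
next
  case (Suc t)
  let ?g = "\<lambda>v. tgt (sg v)"
  show ?case
  proof
    assume H: "\<forall>s<Suc t. (?g^^s) x \<noteq> a"
    then have IH: "(?g^^t) x \<in> cls a" "(x, (?g^^t) x) \<in> (edge_rel T src tgt)\<^sup>*" using Suc by auto
    have na: "(?g^^t) x \<noteq> a" using H by auto
    have e: "((?g^^t) x, (?g^^Suc t) x) \<in> edge_rel T src tgt"
      using sg IH na unfolding edge_rel_def by force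
    show "(?g^^Suc t) x \<in> cls a \<and> (x, (?g^^Suc t) x) \<in> (edge_rel T src tgt)\<^sup>*"
      using sg IH na e by (auto intro: rtrancl_into_rtrancl)
  qed
qed

lemma walk_reach:
  assumes sg: "\<forall>v\<in>cls a - {a}. sg v \<in> T \<and> src (sg v) = v \<and> tgt (sg v) \<in> cls a"
    and T: "T \<subseteq> {..<r}" and nc: "\<not> has_cycle T src tgt" and x: "x \<in> cls a"
  shows "\<exists>t. ((\<lambda>v. tgt (sg v))^^t) x = a"
proof (rule ccontr)
  let ?g = "\<lambda>v. tgt (sg v)"
  assume "\<not> (\<exists>t. (?g^^t) x = a)"
  then have na: "\<And>t. (?g^^t) x \<noteq> a" by auto
  have inC: "\<And>t. (?g^^t) x \<in> cls a" using walk_in[OF sg x] na by blast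
  have "\<not> inj_on (\<lambda>t. (?g^^t) x) {..card (cls a)}"
  proof
    assume "inj_on (\<lambda>t. (?g^^t) x) {..card (cls a)}"
    then have "card {..card (cls a)} \<le> card (cls a)"
      using card_inj_on_le[of _ "{..card (cls a)}" "cls a"] inC cls_finite by blast
    then show False by simp
  qed
  then obtain i j where ij: "i < j" "(?g^^i) x = (?g^^j) x"
    unfolding inj_on_def by (metis linorder_neqE_nat)
  define w where "w = (?g^^i) x"
  have wt: "\<And>t. (?g^^t) w = (?g^^(t + i)) x" unfolding w_def by (simp add: funpow_add)
  have wC: "\<And>t. (?g^^t) w \<in> cls a" and wna: "\<And>t. (?g^^t) w \<noteq> a" using wt inC na by auto
  have "(?g^^(j-i)) w = (?g^^(j - i + i)) x" unfolding w_def by (simp only: funpow_add o_apply)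
  also have "\<dots> = w" using ij unfolding w_def by simp
  finally have ex: "\<exists>d. 0 < d \<and> (?g^^d) w = w"
    using ij by (intro exI[of _ "j - i"]) simp
  define d where "d = (LEAST d. 0 < d \<and> (?g^^d) w = w)"
  have d: "0 < d" "(?g^^d) w = w" using LeastI_ex[OF ex] unfolding d_def by auto
  have dmin: "\<And>e. 0 < e \<Longrightarrow> e < d \<Longrightarrow> (?g^^e) w \<noteq> w"
    unfolding d_def using not_less_Least by blast
  have sgp: "\<And>t. sg ((?g^^t) w) \<in> T \<and> src (sg ((?g^^t) w)) = (?g^^t) w"
    using sg wC wna by blast
  have injV: "inj_on (\<lambda>t. (?g^^t) w) {..<d}"
  proof (rule inj_onI, rule ccontr)
    fix s t assume st: "s \<in> {..<d}" "t \<in> {..<d}" "(?g^^s) w = (?g^^t) w" "s \<noteq> t"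
    { fix s t assume st: "s < t" "t < d" "(?g^^s) w = (?g^^t) w"
      have "(?g^^(d - t + s)) w = (?g^^(d - t)) ((?g^^s) w)" by (simp add: funpow_add)
      also have "\<dots> = (?g^^(d - t)) ((?g^^t) w)" using st by simp
      also have "\<dots> = (?g^^(d - t + t)) w" by (simp only: funpow_add o_apply)
      also have "\<dots> = w" using st d by simp
      finally have e: "(?g^^(d - t + s)) w = w" .
      have p1: "0 < d - t + s" and p2: "d - t + s < d" using st by auto
      have "(?g^^(d - t + s)) w \<noteq> w" by (rule dmin[OF p1 p2])
      then have False using e by contradiction }
    then show False using st by (metis lessThan_iff linorder_neqE_nat)
  qed
  have d2: "d \<ge> 2"
  proof (rule ccontr)
    assume "\<not> d \<ge> 2" then have "d = 1" using d by simp
    then have "?g w = w" using d by simp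
    moreover have "sg w \<in> T" "src (sg w) = w" using sgp[of 0] by auto
    ultimately have "src (sg w) = tgt (sg w)" "sg w < r" using T by auto
    then show False using noloop by blast
  qed
  have "has_cycle T src tgt"
  proof (rule mk_cycle[of d "\<lambda>t. (?g^^t) w" "\<lambda>t. sg ((?g^^t) w)"])
    show "2 \<le> d" by fact
    show "inj_on (\<lambda>t. (?g^^t) w) {..<d}" by fact
    show "inj_on (\<lambda>t. sg ((?g^^t) w)) {..<d}"
      using injV sgp unfolding inj_on_def by metis
    show "\<forall>t<d. sg ((?g^^t) w) \<in> T \<and>
        {src (sg ((?g^^t) w)), tgt (sg ((?g^^t) w))} = {(?g^^t) w, (?g^^((t + 1) mod d)) w}"
    proof (intro allI impI conjI)
      fix t assume t: "t < d"
      show "sg ((?g^^t) w) \<in> T" using sgp by blast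
      have "(?g^^((t + 1) mod d)) w = ?g ((?g^^t) w)"
      proof (cases "t + 1 < d")
        case True then show ?thesis by simp
      next
        case False then have "t + 1 = d" using t by simp
        then show ?thesis using d by (metis funpow.simps(2) mod_self o_apply funpow_0 add.commute plus_1_eq_Suc)
      qed
      then show "{src (sg ((?g^^t) w)), tgt (sg ((?g^^t) w))} = {(?g^^t) w, (?g^^((t + 1) mod d)) w}"
        using sgp by simp
    qed
  qed
  then show False using nc by simp
qed

lemma walk_reach_rel:
  assumes sg: "\<forall>v\<in>cls a - {a}. sg v \<in> T \<and> src (sg v) = v \<and> tgt (sg v) \<in> cls a"
    and x: "x \<in> cls a" and t: "((\<lambda>v. tgt (sg v))^^t) x = a"
  shows "(x, a) \<in> (edge_rel T src tgt)\<^sup>*"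
proof -
  let ?g = "\<lambda>v. tgt (sg v)"
  define t0 where "t0 = (LEAST t. (?g^^t) x = a)"
  have t0: "(?g^^t0) x = a" unfolding t0_def using LeastI[of "\<lambda>t. (?g^^t) x = a"] t by blast
  have "\<forall>s<t0. (?g^^s) x \<noteq> a" unfolding t0_def using not_less_Least by blast
  then show ?thesis using walk_in[OF sg x, of t0] t0 by simp
qed

lemma ft_no_cycle:
  assumes "ft a T" shows "\<not> has_cycle T src tgt"
proof
  assume "has_cycle T src tgt"
  then obtain es vs where cyc: "length es = length vs" "length es \<ge> 2" "distinct es" "distinct vs"
    "set es \<subseteq> T" "\<forall>i<length es. {src (es ! i), tgt (es ! i)} = {vs ! i, vs ! ((i + 1) mod length es)}"
    unfolding has_cycle_def by blast
  define k where "k = length es"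
  have kpos: "k > 0" using cyc(2) k_def by linarith
  have inT: "\<And>i. i < k \<Longrightarrow> es ! i \<in> T" using cyc k_def by auto
  have modk: "\<And>i. (i + 1) mod k < k" using kpos by simp
  have srcV: "\<And>i. i < k \<Longrightarrow> src (es ! i) \<in> set vs"
  proof -
    fix i assume i: "i < k"
    have "src (es ! i) \<in> {vs ! i, vs ! ((i + 1) mod k)}" using cyc(6) i k_def by blast
    then show "src (es ! i) \<in> set vs" using i modk[of i] cyc(1) k_def by auto
  qed
  have tgtV: "\<And>i. i < k \<Longrightarrow> tgt (es ! i) \<in> set vs"
  proof -
    fix i assume i: "i < k"
    have "tgt (es ! i) \<in> {vs ! i, vs ! ((i + 1) mod k)}" using cyc(6) i k_def by blast
    then show "tgt (es ! i) \<in> set vs" using i modk[of i] cyc(1) k_def by auto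
  qed
  have ftT: "\<forall>l\<in>T. src l \<in> cls a \<and> tgt l \<in> cls a" "\<forall>l\<in>T. src l \<noteq> a"
    "\<forall>v\<in>cls a. v \<noteq> a \<longrightarrow> (\<exists>!l. l \<in> T \<and> src l = v)" "\<forall>v\<in>cls a. (v, a) \<in> (edge_rel T src tgt)\<^sup>*"
    using assms unfolding ft_def by auto
  have uniq: "\<And>l l'. l \<in> T \<Longrightarrow> l' \<in> T \<Longrightarrow> src l = src l' \<Longrightarrow> l = l'"
    using ftT(1,2,3) by metis
  have inj: "inj_on (\<lambda>i. src (es ! i)) {..<k}"
  proof (rule inj_onI)
    fix i j assume "i \<in> {..<k}" "j \<in> {..<k}" "src (es ! i) = src (es ! j)"
    then have "es ! i = es ! j" using uniq inT by blast
    moreover have "i < length es" "j < length es" using \<open>i \<in> {..<k}\<close> \<open>j \<in> {..<k}\<close> k_def by auto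
    ultimately show "i = j" using nth_eq_iff_index_eq[of es i j] cyc(3) by simp
  qed
  have img: "(\<lambda>i. src (es ! i)) ` {..<k} = set vs"
  proof (rule card_subset_eq)
    show "finite (set vs)" by simp
    show "(\<lambda>i. src (es ! i)) ` {..<k} \<subseteq> set vs" using srcV by auto
    show "card ((\<lambda>i. src (es ! i)) ` {..<k}) = card (set vs)"
      using card_image[OF inj] cyc(1,4) k_def distinct_card by fastforce
  qed
  have closed: "\<And>x y. x \<in> set vs \<Longrightarrow> (x, y) \<in> edge_rel T src tgt \<Longrightarrow> y \<in> set vs"
  proof -
    fix x y assume x: "x \<in> set vs" and e: "(x, y) \<in> edge_rel T src tgt"
    obtain i where i: "i < k" "x = src (es ! i)" using img x by auto
    obtain l where l: "l \<in> T" "x = src l" "y = tgt l" using e unfolding edge_rel_def by auto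
    have "l = es ! i" using uniq l i inT by metis
    then show "y \<in> set vs" using tgtV i l by simp
  qed
  have v0: "vs ! 0 \<in> set vs" using cyc kpos k_def by simp
  have "vs ! 0 \<in> {src (es ! 0), tgt (es ! 0)}" using cyc(6) kpos k_def by auto
  then have "vs ! 0 \<in> cls a" using ftT(1) inT[of 0] kpos by auto
  then have "(vs ! 0, a) \<in> (edge_rel T src tgt)\<^sup>*" using ftT(4) by blast
  then have "a \<in> set vs" using v0
    by (induct rule: rtrancl_induct) (auto intro: closed)
  then obtain i where "i < k" "a = src (es ! i)" using img by (metis imageE lessThan_iff)
  then show False using ftT(2) inT by metis
qed

end

context rg
begin

lemma st_unique:
  assumes T: "T \<subseteq> {..<r}" and inC: "\<forall>l\<in>T. src l \<in> cls a \<and> tgt l \<in> cls a"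
    and noa: "\<forall>l\<in>T. src l \<noteq> a" and ex: "\<forall>v\<in>cls a. v \<noteq> a \<longrightarrow> (\<exists>l\<in>T. src l = v)"
    and nc: "\<not> has_cycle T src tgt"
    and l: "l1 \<in> T" "l2 \<in> T" "src l1 = src l2"
  shows "l1 = l2"
proof (rule ccontr)
  assume ne: "l1 \<noteq> l2"
  define v where "v = src l1"
  have vC: "v \<in> cls a" and va: "v \<noteq> a" using inC noa l unfolding v_def by auto
  define s0 where "s0 = (\<lambda>x. SOME l. l \<in> T \<and> src l = x)"
  have s0: "\<forall>x\<in>cls a - {a}. s0 x \<in> T \<and> src (s0 x) = x \<and> tgt (s0 x) \<in> cls a"
  proof
    fix x assume x: "x \<in> cls a - {a}"
    then have "\<exists>l. l \<in> T \<and> src l = x" using ex by blast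
    then have "s0 x \<in> T \<and> src (s0 x) = x" unfolding s0_def by (rule someI_ex)
    then show "s0 x \<in> T \<and> src (s0 x) = x \<and> tgt (s0 x) \<in> cls a" using inC by blast
  qed
  define s1 where "s1 = s0(v := l1)"
  define s2 where "s2 = s0(v := l2)"
  have s1: "\<forall>x\<in>cls a - {a}. s1 x \<in> T \<and> src (s1 x) = x \<and> tgt (s1 x) \<in> cls a"
    using s0 l inC unfolding s1_def v_def by auto
  have s2: "\<forall>x\<in>cls a - {a}. s2 x \<in> T \<and> src (s2 x) = x \<and> tgt (s2 x) \<in> cls a"
    using s0 l inC unfolding s2_def v_def by auto
  define g1 where "g1 = (\<lambda>x. tgt (s1 x))"
  define g2 where "g2 = (\<lambda>x. tgt (s2 x))"
  define w1 where "w1 = tgt l1"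
  define w2 where "w2 = tgt l2"
  have w1C: "w1 \<in> cls a" and w2C: "w2 \<in> cls a" using inC l unfolding w1_def w2_def by auto
  have ex1: "\<exists>t. (g1^^t) w1 = a" unfolding g1_def by (rule walk_reach[OF s1 T nc w1C])
  have ex2: "\<exists>t. (g2^^t) w2 = a" unfolding g2_def by (rule walk_reach[OF s2 T nc w2C])
  define A where "A = (LEAST t. (g1^^t) w1 = a)"
  define B where "B = (LEAST t. (g2^^t) w2 = a)"
  have XA: "(g1^^A) w1 = a" unfolding A_def using LeastI_ex[OF ex1] .
  have YB: "(g2^^B) w2 = a" unfolding B_def using LeastI_ex[OF ex2] .
  have Xna: "\<forall>t<A. (g1^^t) w1 \<noteq> a" unfolding A_def using not_less_Least by blast
  have Yna: "\<forall>t<B. (g2^^t) w2 \<noteq> a" unfolding B_def using not_less_Least by blast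
  define X where "X = (\<lambda>t. (g1^^t) w1)"
  define Y where "Y = (\<lambda>t. (g2^^t) w2)"
  have g1v: "g1 v = w1" unfolding g1_def s1_def w1_def by simp
  have g2v: "g2 v = w2" unfolding g2_def s2_def w2_def by simp
  have Xnv: "\<And>t. t \<le> A \<Longrightarrow> X t \<noteq> v"
  proof
    fix t assume "t \<le> A" "X t = v"
    then have "v = a" using walk_loop[OF XA Xna, of t v] g1v unfolding X_def by simp
    then show False using va by simp
  qed
  have Ynv: "\<And>t. t \<le> B \<Longrightarrow> Y t \<noteq> v"
  proof
    fix t assume "t \<le> B" "Y t = v"
    then have "v = a" using walk_loop[OF YB Yna, of t v] g2v unfolding Y_def by simp
    then show False using va by simp
  qed
  have XC: "\<And>t. t \<le> A \<Longrightarrow> X t \<in> cls a"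
    using walk_in[OF s1 w1C] Xna unfolding X_def g1_def by auto
  have YC: "\<And>t. t \<le> B \<Longrightarrow> Y t \<in> cls a"
    using walk_in[OF s2 w2C] Yna unfolding Y_def g2_def by auto
  have Xinj: "inj_on X {..A}" unfolding X_def by (rule walk_least[OF XA Xna])
  have Yinj: "inj_on Y {..B}" unfolding Y_def by (rule walk_least[OF YB Yna])
  have Xstep: "\<And>t. t < A \<Longrightarrow> s0 (X t) \<in> T \<and> src (s0 (X t)) = X t \<and> tgt (s0 (X t)) = X (Suc t)"
  proof -
    fix t assume t: "t < A"
    have "X t \<noteq> v" "X t \<noteq> a" "X t \<in> cls a" using Xnv XC Xna t unfolding X_def by auto
    then show "s0 (X t) \<in> T \<and> src (s0 (X t)) = X t \<and> tgt (s0 (X t)) = X (Suc t)"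
      using s0 unfolding X_def g1_def s1_def by auto
  qed
  have Ystep: "\<And>t. t < B \<Longrightarrow> s0 (Y t) \<in> T \<and> src (s0 (Y t)) = Y t \<and> tgt (s0 (Y t)) = Y (Suc t)"
  proof -
    fix t assume t: "t < B"
    have "Y t \<noteq> v" "Y t \<noteq> a" "Y t \<in> cls a" using Ynv YC Yna t unfolding Y_def by auto
    then show "s0 (Y t) \<in> T \<and> src (s0 (Y t)) = Y t \<and> tgt (s0 (Y t)) = Y (Suc t)"
      using s0 unfolding Y_def g2_def s2_def by auto
  qed
  have "X A = Y B" using XA YB unfolding X_def Y_def by simp
  then have "A \<le> A \<and> (\<exists>s\<le>B. X A = Y s)" by auto
  then have exm: "\<exists>t. t \<le> A \<and> (\<exists>s\<le>B. X t = Y s)" by (rule exI)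
  define p where "p = (LEAST t. t \<le> A \<and> (\<exists>s\<le>B. X t = Y s))"
  have pA: "p \<le> A" and "\<exists>s\<le>B. X p = Y s" using LeastI_ex[OF exm] unfolding p_def by auto
  then obtain q where qB: "q \<le> B" and pq: "X p = Y q" by blast
  have pmin: "\<And>t s. t < p \<Longrightarrow> s \<le> B \<Longrightarrow> X t \<noteq> Y s"
  proof
    fix t s assume "t < p" "s \<le> B" "X t = Y s"
    then have "t \<le> A \<and> (\<exists>s\<le>B. X t = Y s)" using pA by auto
    then have "p \<le> t" unfolding p_def by (rule Least_le)
    then show False using \<open>t < p\<close> by simp
  qed
  define V where "V = (\<lambda>t. if t < p then X t else if t \<le> p + q then Y (p + q - t) else v)"
  define Ed where "Ed = (\<lambda>t. if t < p then s0 (X t) else if t < p + q then s0 (Y (p + q - t - 1))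
     else if t = p + q then l2 else l1)"
  define d where "d = p + q + 2"
  have "has_cycle T src tgt"
  proof (rule mk_cycle[of d V Ed])
    show "2 \<le> d" unfolding d_def by simp
    show "inj_on V {..<d}"
    proof (rule inj_onI)
      fix t1 t2 assume t1: "t1 \<in> {..<d}" and t2: "t2 \<in> {..<d}" and e: "V t1 = V t2"
      have reg: "\<And>t. t < d \<Longrightarrow> (t < p \<and> V t = X t) \<or> (p \<le> t \<and> t \<le> p + q \<and> V t = Y (p + q - t)) \<or>
          (t = p + q + 1 \<and> V t = v)" unfolding V_def d_def by auto
      have XY: "\<And>i j. i < p \<Longrightarrow> j \<le> q \<Longrightarrow> X i \<noteq> Y j" using pmin qB by simp
      have Xv: "\<And>i. i < p \<Longrightarrow> X i \<noteq> v" using Xnv pA by simp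
      have Yv: "\<And>j. j \<le> q \<Longrightarrow> Y j \<noteq> v" using Ynv qB by simp
      have XX: "\<And>i j. i < p \<Longrightarrow> j < p \<Longrightarrow> X i = X j \<Longrightarrow> i = j"
        using Xinj pA unfolding inj_on_def by (meson atMost_iff less_imp_le_nat order_trans)
      have YY: "\<And>i j. i \<le> q \<Longrightarrow> j \<le> q \<Longrightarrow> Y i = Y j \<Longrightarrow> i = j"
        using Yinj qB unfolding inj_on_def by (meson atMost_iff order_trans)
      have "t1 < d" "t2 < d" using t1 t2 by auto
      from reg[OF this(1)] reg[OF this(2)] e show "t1 = t2"
      proof (elim disjE conjE)
        fix x assume "t1 < p" "t2 < p" "V t1 = X t1" "V t2 = X t2" "V t1 = V t2"
        then show "t1 = t2" using XX by simp
      next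
        assume "t1 < p" "p \<le> t2" "t2 \<le> p + q" "V t1 = X t1" "V t2 = Y (p + q - t2)" "V t1 = V t2"
        moreover have "p + q - t2 \<le> q" using \<open>p \<le> t2\<close> by linarith
        ultimately show "t1 = t2" using XY[of t1 "p + q - t2"] by simp
      next
        assume "p \<le> t1" "t1 \<le> p + q" "t2 < p" "V t2 = X t2" "V t1 = Y (p + q - t1)" "V t1 = V t2"
        then show "t1 = t2" using XY[of t2 "p + q - t1"] by simp
      next
        assume "p \<le> t1" "t1 \<le> p + q" "p \<le> t2" "t2 \<le> p + q" "V t2 = Y (p + q - t2)" "V t1 = Y (p + q - t1)" "V t1 = V t2"
        then have yy: "Y (p + q - t1) = Y (p + q - t2)" by simp
        have le1: "p + q - t1 \<le> q" and le2: "p + q - t2 \<le> q" using \<open>p \<le> t1\<close> \<open>p \<le> t2\<close> by linarith+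
        have "p + q - t1 = p + q - t2" by (rule YY[OF le1 le2 yy])
        then show "t1 = t2" using \<open>t1 \<le> p + q\<close> \<open>t2 \<le> p + q\<close> by linarith
      next
        assume "t1 = p + q + 1" "V t1 = v" "p \<le> t2" "t2 \<le> p + q" "V t2 = Y (p + q - t2)" "V t1 = V t2"
        moreover have "p + q - t2 \<le> q" using \<open>p \<le> t2\<close> by linarith
        ultimately show "t1 = t2" using Yv[of "p + q - t2"] by simp
      next
        assume "t1 = p + q + 1" "t2 = p + q + 1"
        then show "t1 = t2" by simp
      qed (use Xv Yv in \<open>force+\<close>)
    qed
    have Eds: "\<And>t. t < d \<Longrightarrow> Ed t \<in> T \<and> src (Ed t) = (if t < p then X t else if t < p + q then Y (p + q - t - 1) else v)"
    proof -
      fix t assume t: "t < d"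
      show "Ed t \<in> T \<and> src (Ed t) = (if t < p then X t else if t < p + q then Y (p + q - t - 1) else v)"
      proof (cases "t < p")
        case True then show ?thesis using Xstep[of t] pA unfolding Ed_def by simp
      next
        case f1: False
        show ?thesis
        proof (cases "t < p + q")
          case True then show ?thesis using Ystep[of "p + q - t - 1"] qB f1 unfolding Ed_def by simp
        next
          case False then show ?thesis using f1 l t unfolding Ed_def d_def v_def by auto
        qed
      qed
    qed
    show "inj_on Ed {..<d}"
    proof (rule inj_onI)
      fix t1 t2 assume t1: "t1 \<in> {..<d}" and t2: "t2 \<in> {..<d}" and e: "Ed t1 = Ed t2"
      have t12: "t1 < d" "t2 < d" using t1 t2 by auto
      have se: "src (Ed t1) = src (Ed t2)" using e by simp
      have Q: "\<And>t. p \<le> t \<Longrightarrow> t < p + q \<Longrightarrow> p + q - t - 1 < q" by linarith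
      have XY: "\<And>i j. i < p \<Longrightarrow> j < q \<Longrightarrow> X i \<noteq> Y j" using pmin qB by simp
      have Xv: "\<And>i. i < p \<Longrightarrow> X i \<noteq> v" using Xnv pA by simp
      have Yv: "\<And>j. j < q \<Longrightarrow> Y j \<noteq> v" using Ynv qB by simp
      have XX: "\<And>i j. i < p \<Longrightarrow> j < p \<Longrightarrow> X i = X j \<Longrightarrow> i = j"
        using Xinj pA unfolding inj_on_def by (meson atMost_iff less_imp_le_nat order_trans)
      have YY: "\<And>i j. i < q \<Longrightarrow> j < q \<Longrightarrow> Y i = Y j \<Longrightarrow> i = j"
        using Yinj qB unfolding inj_on_def by (meson atMost_iff less_imp_le_nat order_trans)
      consider "t1 < p" | "p \<le> t1" "t1 < p + q" | "t1 = p + q" | "t1 = p + q + 1" using t12 unfolding d_def by linarith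
      then show "t1 = t2"
      proof cases
        case 1
        consider "t2 < p" | "p \<le> t2" "t2 < p + q" | "p + q \<le> t2" by linarith
        then show ?thesis
        proof cases
          case 1 then show ?thesis using \<open>t1 < p\<close> se Eds t12 XX by auto
        next
          case 2
          then have "p + q - t2 - 1 < q" by linarith
          then show ?thesis using 2 \<open>t1 < p\<close> se Eds[of t1] Eds[of t2] t12 Q XY[of t1 "p + q - t2 - 1"] by auto
        next
          case 3 then show ?thesis using \<open>t1 < p\<close> se Eds[of t1] Eds[of t2] t12 Xv[of t1] by auto
        qed
      next
        case 2
        consider "t2 < p" | "p \<le> t2" "t2 < p + q" | "p + q \<le> t2" by linarith
        then show ?thesis
        proof cases
          case 1 then show ?thesis using 2 se Eds[of t1] Eds[of t2] t12 Q XY[of t2 "p + q - t1 - 1"] by auto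
        next
          case 3 then show ?thesis using 2 se Eds[of t1] Eds[of t2] t12 Q Yv[of "p + q - t1 - 1"] by auto
        next
          case b: 2
          then have "Y (p + q - t1 - 1) = Y (p + q - t2 - 1)" using 2 se Eds[of t1] Eds[of t2] t12 by auto
          then have "p + q - t1 - 1 = p + q - t2 - 1" using YY[of "p + q - t1 - 1" "p + q - t2 - 1"] 2 b by auto
          then show ?thesis using 2 b by simp
        qed
      next
        case 3
        consider "t2 < p" | "p \<le> t2" "t2 < p + q" | "t2 = p + q" | "t2 = p + q + 1" using t12 unfolding d_def by linarith
        then show ?thesis
        proof cases
          case 1 then show ?thesis using 3 se Eds[of t1] Eds[of t2] t12 Xv[of t2] by auto
        next
          case 2 then show ?thesis using 3 se Eds[of t1] Eds[of t2] t12 Q Yv[of "p + q - t2 - 1"] by auto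
        next
          case 4 then show ?thesis using 3 e ne unfolding Ed_def by simp
        qed (use 3 in simp)
      next
        case 4
        consider "t2 < p" | "p \<le> t2" "t2 < p + q" | "t2 = p + q" | "t2 = p + q + 1" using t12 unfolding d_def by linarith
        then show ?thesis
        proof cases
          case 1 then show ?thesis using 4 se Eds[of t1] Eds[of t2] t12 Xv[of t2] by auto
        next
          case 2 then show ?thesis using 4 se Eds[of t1] Eds[of t2] t12 Q Yv[of "p + q - t2 - 1"] by auto
        next
          case 3 then show ?thesis using 4 e ne unfolding Ed_def by simp
        qed (use 4 in simp)
      qed
    qed
    show "\<forall>t<d. Ed t \<in> T \<and> {src (Ed t), tgt (Ed t)} = {V t, V ((t + 1) mod d)}"
    proof (intro allI impI conjI)
      fix t assume t: "t < d"
      show "Ed t \<in> T" using Eds[OF t] by simp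
      consider "t < p" | "p \<le> t" "t < p + q" | "t = p + q" | "t = p + q + 1" using t unfolding d_def by linarith
      then show "{src (Ed t), tgt (Ed t)} = {V t, V ((t + 1) mod d)}"
      proof cases
        case 1
        have m: "(t + 1) mod d = Suc t" using t 1 unfolding d_def by simp
        have "V (Suc t) = X (Suc t)"
        proof (cases "Suc t < p")
          case True then show ?thesis unfolding V_def by simp
        next
          case False then have "Suc t = p" using 1 by simp
          then show ?thesis unfolding V_def using pq by simp
        qed
        moreover have "V t = X t" using 1 unfolding V_def by simp
        moreover have "Ed t = s0 (X t)" using 1 unfolding Ed_def by simp
        ultimately show ?thesis using Xstep[of t] 1 pA m by simp
      next
        case 2
        define j where "j = p + q - t - 1"
        have j: "j < q" "p + q - t = Suc j" "p + q - Suc t = j" using 2 unfolding j_def by auto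
        have m: "(t + 1) mod d = Suc t" using t 2 unfolding d_def by simp
        have "V t = Y (Suc j)" "V (Suc t) = Y j" using 2 j unfolding V_def by auto
        moreover have "Ed t = s0 (Y j)" using 2 unfolding Ed_def j_def by simp
        ultimately show ?thesis using Ystep[of j] j qB m by (simp add: insert_commute)
      next
        case 3
        have m: "(t + 1) mod d = Suc t" using t 3 unfolding d_def by simp
        have "V t = Y 0" "V (Suc t) = v" using 3 unfolding V_def by auto
        moreover have "Ed t = l2" using 3 unfolding Ed_def by simp
        ultimately show ?thesis using m l(3) unfolding v_def Y_def w2_def by (simp add: insert_commute)
      next
        case 4
        have m: "(t + 1) mod d = 0" using 4 unfolding d_def by simp
        have "V t = v" using 4 unfolding V_def by auto
        moreover have "V 0 = X 0"
        proof (cases "0 < p")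
          case True then show ?thesis unfolding V_def by simp
        next
          case False then show ?thesis unfolding V_def using pq by simp
        qed
        moreover have "Ed t = l1" using 4 unfolding Ed_def by simp
        ultimately show ?thesis using m unfolding v_def X_def w1_def by simp
      qed
    qed
  qed
  then show False using nc by simp
qed

lemma st_ft: "spanning_tree r src tgt a T \<longleftrightarrow> ft a T"
proof
  assume st: "spanning_tree r src tgt a T"
  have T: "T \<subseteq> {..<r}" and inC: "\<forall>l\<in>T. src l \<in> cls a \<and> tgt l \<in> cls a"
    and nc: "\<not> has_cycle T src tgt" and noa: "\<forall>l\<in>T. src l \<noteq> a"
    and ex: "\<forall>v\<in>cls a. v \<noteq> a \<longrightarrow> (\<exists>l\<in>T. src l = v)"
    using st unfolding spanning_tree_def by auto
  have uq: "\<forall>v\<in>cls a. v \<noteq> a \<longrightarrow> (\<exists>!l. l \<in> T \<and> src l = v)"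
    using st_unique[OF T inC noa ex nc] ex by metis
  define s0 where "s0 = (\<lambda>x. SOME l. l \<in> T \<and> src l = x)"
  have s0: "\<forall>x\<in>cls a - {a}. s0 x \<in> T \<and> src (s0 x) = x \<and> tgt (s0 x) \<in> cls a"
  proof
    fix x assume x: "x \<in> cls a - {a}"
    then have "\<exists>l. l \<in> T \<and> src l = x" using ex by blast
    then have "s0 x \<in> T \<and> src (s0 x) = x" unfolding s0_def by (rule someI_ex)
    then show "s0 x \<in> T \<and> src (s0 x) = x \<and> tgt (s0 x) \<in> cls a" using inC by blast
  qed
  have reach: "\<forall>v\<in>cls a. (v, a) \<in> (edge_rel T src tgt)\<^sup>*"
  proof
    fix v assume v: "v \<in> cls a"
    obtain t where "((\<lambda>x. tgt (s0 x))^^t) v = a" using walk_reach[OF s0 T nc v] by blast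
    then show "(v, a) \<in> (edge_rel T src tgt)\<^sup>*" using walk_reach_rel[OF s0 v] by blast
  qed
  show "ft a T" unfolding ft_def using T inC noa uq reach by blast
next
  assume ft: "ft a T"
  have T: "T \<subseteq> {..<r}" and inC: "\<forall>l\<in>T. src l \<in> cls a \<and> tgt l \<in> cls a"
    and noa: "\<forall>l\<in>T. src l \<noteq> a"
    and ex: "\<forall>v\<in>cls a. v \<noteq> a \<longrightarrow> (\<exists>!l. l \<in> T \<and> src l = v)"
    and reach: "\<forall>v\<in>cls a. (v, a) \<in> (edge_rel T src tgt)\<^sup>*"
    using ft unfolding ft_def by auto
  have conn: "\<forall>v\<in>cls a. (a, v) \<in> (edge_rel T src tgt \<union> (edge_rel T src tgt)\<inverse>)\<^sup>*"
  proof
    fix v assume "v \<in> cls a"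
    then have "(v, a) \<in> (edge_rel T src tgt)\<^sup>*" using reach by blast
    then have "(a, v) \<in> ((edge_rel T src tgt)\<inverse>)\<^sup>*" by (simp add: rtrancl_converse)
    moreover have "((edge_rel T src tgt)\<inverse>)\<^sup>* \<subseteq> (edge_rel T src tgt \<union> (edge_rel T src tgt)\<inverse>)\<^sup>*"
      by (rule rtrancl_mono) blast
    ultimately show "(a, v) \<in> (edge_rel T src tgt \<union> (edge_rel T src tgt)\<inverse>)\<^sup>*" by blast
  qed
  have nc: "\<not> has_cycle T src tgt" by (rule ft_no_cycle[OF ft])
  have ex2: "\<forall>v\<in>cls a. v \<noteq> a \<longrightarrow> (\<exists>l\<in>T. src l = v)" using ex by blast
  show "spanning_tree r src tgt a T" unfolding spanning_tree_def
    using T inC conn nc noa ex2 by blast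
qed

end

locale rgw = rg +
  assumes wr: "weakly_reversible r src tgt"
begin

lemma strong_conn: assumes "b \<in> cls a" shows "(a, b) \<in> E\<^sup>*"
proof -
  have sub: "E \<union> E\<inverse> \<subseteq> E\<^sup>*"
  proof
    fix p assume "p \<in> E \<union> E\<inverse>"
    obtain x y where p: "p = (x, y)" by (cases p)
    have "(x, y) \<in> E \<or> (y, x) \<in> E" using p \<open>p \<in> E \<union> E\<inverse>\<close> by auto
    then show "p \<in> E\<^sup>*"
    proof (elim disjE)
      assume "(y, x) \<in> E"
      then obtain l where l: "l < r" "y = src l" "x = tgt l" unfolding edge_rel_def by auto
      then have "(tgt l, src l) \<in> E\<^sup>*" using wr unfolding weakly_reversible_def by blast
      then show "p \<in> E\<^sup>*" using p l by simp
    next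
      assume "(x, y) \<in> E" then show "p \<in> E\<^sup>*" using p by auto
    qed
  qed
  have "(a, b) \<in> (E \<union> E\<inverse>)\<^sup>*" using assms by (simp add: linkage_class_def)
  then show ?thesis using rtrancl_subset_rtrancl[OF sub] by blast
qed

lemma strong_conn2: assumes "b \<in> cls a" shows "(b, a) \<in> E\<^sup>*"
  using strong_conn[OF cls_sym[OF assms]] .

lemma ft_exists: "\<exists>T. ft a T"
proof -
  let ?C = "cls a"
  have ex: "\<And>v. v \<in> ?C \<Longrightarrow> \<exists>n. (v, a) \<in> E ^^ n"
    using strong_conn2 rtrancl_power by blast
  define dist where "dist = (\<lambda>v. LEAST n. (v, a) \<in> E ^^ n)"
  have distI: "\<And>v. v \<in> ?C \<Longrightarrow> (v, a) \<in> E ^^ dist v"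
    unfolding dist_def using ex by (meson LeastI_ex)
  have distle: "\<And>v n. (v, a) \<in> E ^^ n \<Longrightarrow> dist v \<le> n"
    unfolding dist_def by (rule Least_le)
  have step: "\<And>v. v \<in> ?C \<Longrightarrow> v \<noteq> a \<Longrightarrow> \<exists>l. l < r \<and> src l = v \<and> dist (tgt l) < dist v"
  proof -
    fix v assume v: "v \<in> ?C" "v \<noteq> a"
    have d: "(v, a) \<in> E ^^ dist v" using distI v by blast
    have "dist v \<noteq> 0" using d v by (metis relpow_0_E)
    then obtain m where m: "dist v = Suc m" by (metis not0_implies_Suc)
    then obtain y where y: "(v, y) \<in> E" "(y, a) \<in> E ^^ m" using d by (metis relpow_Suc_D2)
    obtain l where l: "l < r" "src l = v" "tgt l = y" using y(1) unfolding edge_rel_def by auto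
    have "dist y \<le> m" using distle y(2) by blast
    then show "\<exists>l. l < r \<and> src l = v \<and> dist (tgt l) < dist v" using l m by (intro exI[of _ l]) auto
  qed
  define sg where "sg = (\<lambda>v. SOME l. l < r \<and> src l = v \<and> dist (tgt l) < dist v)"
  have sg: "\<And>v. v \<in> ?C \<Longrightarrow> v \<noteq> a \<Longrightarrow> sg v < r \<and> src (sg v) = v \<and> dist (tgt (sg v)) < dist v"
    unfolding sg_def using step by (rule someI_ex) 
  define T where "T = sg ` (?C - {a})"
  have T1: "T \<subseteq> {..<r}" unfolding T_def using sg by auto
  have T2: "\<forall>l\<in>T. src l \<in> ?C \<and> tgt l \<in> ?C" unfolding T_def using sg cls_edge1 by auto
  have T3: "\<forall>l\<in>T. src l \<noteq> a" unfolding T_def using sg by auto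
  have T4: "\<forall>v\<in>?C. v \<noteq> a \<longrightarrow> (\<exists>!l. l \<in> T \<and> src l = v)"
  proof (intro ballI impI)
    fix v assume v: "v \<in> ?C" "v \<noteq> a"
    show "\<exists>!l. l \<in> T \<and> src l = v"
    proof (rule ex1I[of _ "sg v"])
      show "sg v \<in> T \<and> src (sg v) = v" using v sg unfolding T_def by auto
      fix l assume "l \<in> T \<and> src l = v"
      then obtain v' where "v' \<in> ?C - {a}" "l = sg v'" "src l = v" unfolding T_def by auto
      then show "l = sg v" using sg by auto
    qed
  qed
  have T5: "\<forall>v\<in>?C. (v, a) \<in> (edge_rel T src tgt)\<^sup>*"
  proof
    fix v assume "v \<in> ?C"
    then show "(v, a) \<in> (edge_rel T src tgt)\<^sup>*"
    proof (induct "dist v" arbitrary: v rule: less_induct)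
      case (less v)
      show ?case
      proof (cases "v = a")
        case True then show ?thesis by simp
      next
        case False
        have s: "sg v < r" "src (sg v) = v" "dist (tgt (sg v)) < dist v" using sg less(2) False by auto
        have inT: "sg v \<in> T" unfolding T_def using less(2) False by auto
        have tC: "tgt (sg v) \<in> ?C" using cls_edge1 s less(2) by auto
        have "(tgt (sg v), a) \<in> (edge_rel T src tgt)\<^sup>*" using less(1)[OF s(3) tC] .
        moreover have "(v, tgt (sg v)) \<in> edge_rel T src tgt" unfolding mem_edge_rel using inT s by metis
        ultimately show ?thesis by (meson converse_rtrancl_into_rtrancl)
      qed
    qed
  qed
  show ?thesis unfolding ft_def using T1 T2 T3 T4 T5 by blast
qed

lemma tc_ft: "tree_const r src tgt u a = (\<Sum>T\<in>{T. ft a T}. \<Prod>l\<in>T. u l)"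
proof -
  have "{T. spanning_tree r src tgt a T} = {T. ft a T}" using st_ft by blast
  then show ?thesis unfolding tree_const_def by simp
qed

lemma ft_finite: "finite {T. ft a T}"
  by (rule finite_subset[of _ "Pow {..<r}"]) (auto simp: ft_def)

lemma tc_pos:
  assumes u: "\<And>l. l < r \<Longrightarrow> u l > 0"
  shows "tree_const r src tgt u a > 0"
proof -
  obtain T where T: "ft a T" using ft_exists by blast
  have pos: "\<And>T. ft a T \<Longrightarrow> (\<Prod>l\<in>T. u l) > 0"
    using u unfolding ft_def by (auto intro!: prod_pos)
  show ?thesis unfolding tc_ft
    by (rule sum_pos2[OF ft_finite, of T]) (use T pos in \<open>auto intro: less_imp_le\<close>)
qed

end

context rgw
begin

definition U where
  "U j = {S. S \<subseteq> {..<r} \<and> (\<forall>l\<in>S. src l \<in> cls j \<and> tgt l \<in> cls j) \<and>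
     (\<forall>v\<in>cls j. \<exists>!l. l \<in> S \<and> src l = v) \<and> (\<forall>v\<in>cls j. (v, j) \<in> (edge_rel S src tgt)\<^sup>*)}"

lemma avoid_rel:
  assumes "(x, y) \<in> (edge_rel S src tgt)\<^sup>*" "src l = y" "\<forall>l'\<in>S. src l' = y \<longrightarrow> l' = l"
  shows "(x, y) \<in> (edge_rel (S - {l}) src tgt)\<^sup>*"
proof -
  have "(x, y) \<in> {(a,b). (a,b) \<in> edge_rel S src tgt \<and> a \<noteq> y}\<^sup>*" by (rule rtrancl_avoid[OF assms(1)])
  moreover have "{(a,b). (a,b) \<in> edge_rel S src tgt \<and> a \<noteq> y} \<subseteq> edge_rel (S - {l}) src tgt"
    using assms(2,3) unfolding edge_rel_def by auto
  ultimately show ?thesis using rtrancl_mono by blast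
qed

lemma ft_props:
  assumes "ft a T"
  shows "T \<subseteq> {..<r}" "\<forall>l\<in>T. src l \<in> cls a \<and> tgt l \<in> cls a" "\<forall>l\<in>T. src l \<noteq> a"
    "\<forall>v\<in>cls a. v \<noteq> a \<longrightarrow> (\<exists>!l. l \<in> T \<and> src l = v)" "\<forall>v\<in>cls a. (v, a) \<in> (edge_rel T src tgt)\<^sup>*"
    "finite T"
  using assms unfolding ft_def by (auto intro: finite_subset)

lemma out_sum:
  "(\<Sum>l\<in>{l. l < r \<and> src l = j}. u l) * tree_const r src tgt u j = (\<Sum>S\<in>U j. \<Prod>l\<in>S. u l)"
proof -
  define Ou where "Ou = {l. l < r \<and> src l = j}"
  define Ft where "Ft = {T. ft j T}"
  have fO: "finite Ou" unfolding Ou_def by simp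
  have "(\<Sum>l\<in>Ou. u l) * tree_const r src tgt u j = (\<Sum>l\<in>Ou. \<Sum>T\<in>Ft. u l * prod u T)"
    unfolding tc_ft Ft_def by (simp add: sum_product)
  also have "\<dots> = (\<Sum>p\<in>Ou \<times> Ft. u (fst p) * prod u (snd p))"
    by (simp add: sum.cartesian_product split_def)
  also have "\<dots> = (\<Sum>p\<in>Ou \<times> Ft. prod u (insert (fst p) (snd p)))"
  proof (rule sum.cong[OF refl])
    fix p assume "p \<in> Ou \<times> Ft"
    then have "ft j (snd p)" "src (fst p) = j" unfolding Ou_def Ft_def by auto
    then have "fst p \<notin> snd p" "finite (snd p)" using ft_props(3)[of j "snd p"] ft_props(6)[of j "snd p"] by auto
    then show "u (fst p) * prod u (snd p) = prod u (insert (fst p) (snd p))" by simp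
  qed
  also have "\<dots> = (\<Sum>S\<in>U j. prod u S)"
  proof (rule sum.reindex_bij_betw)
    show "bij_betw (\<lambda>p. insert (fst p) (snd p)) (Ou \<times> Ft) (U j)"
    proof (rule bij_betwI')
      fix p q assume p: "p \<in> Ou \<times> Ft" and q: "q \<in> Ou \<times> Ft"
      show "(insert (fst p) (snd p) = insert (fst q) (snd q)) = (p = q)"
      proof
        assume e: "insert (fst p) (snd p) = insert (fst q) (snd q)"
        have fp: "ft j (snd p)" "src (fst p) = j" using p unfolding Ou_def Ft_def by auto
        have fq: "ft j (snd q)" "src (fst q) = j" using q unfolding Ou_def Ft_def by auto
        have np: "\<forall>l\<in>snd p. src l \<noteq> j" and nq: "\<forall>l\<in>snd q. src l \<noteq> j"
          using ft_props(3)[OF fp(1)] ft_props(3)[OF fq(1)] by auto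
        have "fst p \<in> insert (fst q) (snd q)" using e by blast
        then have f: "fst p = fst q" using nq fp(2) by auto
        have "fst p \<notin> snd p" "fst q \<notin> snd q" using np nq fp fq by auto
        then have "snd p = snd q" using e f by (metis insert_ident)
        then show "p = q" using f by (simp add: prod_eq_iff)
      qed simp
    next
      fix p assume p: "p \<in> Ou \<times> Ft"
      have fp: "ft j (snd p)" "src (fst p) = j" "fst p < r" using p unfolding Ou_def Ft_def by auto
      note P = ft_props[OF fp(1)]
      let ?S = "insert (fst p) (snd p)"
      have jC: "j \<in> cls j" by (rule cls_self)
      show "?S \<in> U j" unfolding U_def
      proof (intro CollectI conjI ballI)
        show "?S \<subseteq> {..<r}" using P(1) fp(3) by auto
        fix l assume "l \<in> ?S"
        then have "l = fst p \<or> l \<in> snd p" by blast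
        then have "src l \<in> cls j \<and> tgt l \<in> cls j"
        proof (elim disjE)
          assume "l = fst p"
          have "tgt (fst p) \<in> cls j" using cls_edge1[OF fp(3), of j] fp(2) jC by simp
          then show "src l \<in> cls j \<and> tgt l \<in> cls j" using fp(2) jC \<open>l = fst p\<close> by simp
        next
          assume "l \<in> snd p"
          then show "src l \<in> cls j \<and> tgt l \<in> cls j" using P(2) by auto
        qed
        then show "src l \<in> cls j" "tgt l \<in> cls j" by auto
      next
        fix v assume v: "v \<in> cls j"
        show "\<exists>!l. l \<in> ?S \<and> src l = v"
        proof (cases "v = j")
          case True
          show ?thesis
          proof (rule ex1I[of _ "fst p"])
            show "fst p \<in> ?S \<and> src (fst p) = v" using fp(2) True by simp
            fix l assume "l \<in> ?S \<and> src l = v"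
            then show "l = fst p" using P(3) True by auto
          qed
        next
          case False
          have "\<exists>!l. l \<in> snd p \<and> src l = v" using P(4) v False by blast
          then obtain l where l: "l \<in> snd p" "src l = v" "\<forall>l'. l' \<in> snd p \<and> src l' = v \<longrightarrow> l' = l"
            by blast
          show ?thesis
          proof (rule ex1I[of _ l])
            show "l \<in> ?S \<and> src l = v" using l(1,2) by simp
            fix l' assume l': "l' \<in> ?S \<and> src l' = v"
            then have "l' \<noteq> fst p" using fp(2) False by auto
            then have "l' \<in> snd p" using l' by simp
            then show "l' = l" using l(3) l' by blast
          qed
        qed
        show "(v, j) \<in> (edge_rel ?S src tgt)\<^sup>*"
          using P(5) v rtrancl_edge_mono[of "snd p" ?S] by blast
      qed
    next
      fix S assume S: "S \<in> U j"
      have S1: "S \<subseteq> {..<r}" and S2: "\<forall>l\<in>S. src l \<in> cls j \<and> tgt l \<in> cls j"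
        and S3: "\<forall>v\<in>cls j. \<exists>!l. l \<in> S \<and> src l = v" and S4: "\<forall>v\<in>cls j. (v, j) \<in> (edge_rel S src tgt)\<^sup>*"
        using S unfolding U_def mem_Collect_eq by blast+
      have "\<exists>!l. l \<in> S \<and> src l = j" using S3 cls_self[of j] by blast
      then obtain l where l: "l \<in> S" "src l = j" "\<forall>l'. l' \<in> S \<and> src l' = j \<longrightarrow> l' = l"
        by blast
      define T where "T = S - {l}"
      have F1: "T \<subseteq> {..<r}" using S1 T_def by auto
      have F2: "\<forall>l'\<in>T. src l' \<in> cls j \<and> tgt l' \<in> cls j" using S2 T_def by auto
      have F3: "\<forall>l'\<in>T. src l' \<noteq> j"
      proof
        fix l' assume "l' \<in> T"
        then have "l' \<in> S" "l' \<noteq> l" unfolding T_def by auto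
        then show "src l' \<noteq> j" using l(3) by blast
      qed
      have F4: "\<forall>v\<in>cls j. v \<noteq> j \<longrightarrow> (\<exists>!l. l \<in> T \<and> src l = v)"
      proof (intro ballI impI)
        fix v assume v: "v \<in> cls j" "v \<noteq> j"
        have "\<exists>!l. l \<in> S \<and> src l = v" using S3 v by blast
        then obtain l' where l': "l' \<in> S" "src l' = v" "\<forall>l''. l'' \<in> S \<and> src l'' = v \<longrightarrow> l'' = l'"
          by blast
        show "\<exists>!l. l \<in> T \<and> src l = v"
        proof (rule ex1I[of _ l'])
          have "l' \<noteq> l" using l(2) l'(2) v(2) by auto
          then show "l' \<in> T \<and> src l' = v" using l'(1,2) unfolding T_def by auto
          fix l'' assume "l'' \<in> T \<and> src l'' = v"
          then show "l'' = l'" using l'(3) unfolding T_def by blast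
        qed
      qed
      have F5: "\<forall>v\<in>cls j. (v, j) \<in> (edge_rel T src tgt)\<^sup>*"
      proof
        fix v assume v: "v \<in> cls j"
        show "(v, j) \<in> (edge_rel T src tgt)\<^sup>*" unfolding T_def
        proof (rule avoid_rel)
          show "(v, j) \<in> (edge_rel S src tgt)\<^sup>*" using S4 v by blast
          show "src l = j" by (rule l(2))
          show "\<forall>l'\<in>S. src l' = j \<longrightarrow> l' = l" using l(3) by blast
        qed
      qed
      have "ft j T" unfolding ft_def by (rule conjI[OF F1 conjI[OF F2 conjI[OF F3 conjI[OF F4 F5]]]])
      moreover have "l < r" using S1 l(1) by auto
      ultimately have m: "(l, T) \<in> Ou \<times> Ft" unfolding Ou_def Ft_def using l(2) by simp
      have "S = insert (fst (l, T)) (snd (l, T))" using l(1) T_def by auto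
      then show "\<exists>p\<in>Ou \<times> Ft. S = insert (fst p) (snd p)" using m by (rule rev_bexI[rotated])
    qed
  qed
  finally show ?thesis unfolding Ou_def .
qed

end

context rgw
begin

lemma U_props:
  assumes "S \<in> U j"
  shows "S \<subseteq> {..<r}" "\<forall>l\<in>S. src l \<in> cls j \<and> tgt l \<in> cls j"
    "\<forall>v\<in>cls j. \<exists>!l. l \<in> S \<and> src l = v" "\<forall>v\<in>cls j. (v, j) \<in> (edge_rel S src tgt)\<^sup>*"
  using assms unfolding U_def mem_Collect_eq by blast+

lemma ex1_uniq: "\<exists>!x. P x \<Longrightarrow> P a \<Longrightarrow> P b \<Longrightarrow> a = b" by blast

definition nx where "nx S x = tgt (THE l. l \<in> S \<and> src l = x)"

lemma the_out:
  assumes "S \<in> U j" "x \<in> cls j"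
  shows "(THE l. l \<in> S \<and> src l = x) \<in> S \<and> src (THE l. l \<in> S \<and> src l = x) = x"
proof -
  have "\<exists>!l. l \<in> S \<and> src l = x" using U_props(3)[OF assms(1)] assms(2) by blast
  then show ?thesis by (rule theI')
qed

lemma the_out_eq:
  assumes "S \<in> U j" "l \<in> S"
  shows "(THE l'. l' \<in> S \<and> src l' = src l) = l"
proof -
  have "src l \<in> cls j" using U_props(2)[OF assms(1)] assms(2) by blast
  then have "\<exists>!l'. l' \<in> S \<and> src l' = src l" using U_props(3)[OF assms(1)] by blast
  then show ?thesis by (rule the1_equality) (simp add: assms(2))
qed

lemma nx_eq: "S \<in> U j \<Longrightarrow> l \<in> S \<Longrightarrow> nx S (src l) = tgt l"
  unfolding nx_def using the_out_eq by simp

lemma iter_reach: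
  assumes S: "S \<in> U j" and x: "x \<in> cls j"
  shows "(x, (nx S ^^ t) x) \<in> (edge_rel S src tgt)\<^sup>* \<and> (nx S ^^ t) x \<in> cls j"
proof (induct t)
  case 0 then show ?case using x by simp
next
  case (Suc t)
  define y where "y = (nx S ^^ t) x"
  have y: "(x, y) \<in> (edge_rel S src tgt)\<^sup>*" "y \<in> cls j" using Suc unfolding y_def by auto
  define l where "l = (THE l. l \<in> S \<and> src l = y)"
  have l: "l \<in> S" "src l = y" using the_out[OF S y(2)] unfolding l_def by auto
  have n: "(nx S ^^ Suc t) x = tgt l" using l nx_eq[OF S l(1)] unfolding y_def by simp
  have "(y, tgt l) \<in> edge_rel S src tgt" unfolding mem_edge_rel using l by metis
  moreover have "tgt l \<in> cls j" using U_props(2)[OF S] l by blast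
  ultimately show ?case using y n by (simp add: rtrancl_into_rtrancl)
qed

lemma det_reach:
  assumes S: "S \<in> U j" and x: "x \<in> cls j" and xy: "(x, y) \<in> (edge_rel S src tgt)\<^sup>*"
  shows "\<exists>t. (nx S ^^ t) x = y"
  using xy
proof (induct rule: rtrancl_induct)
  case base show ?case by (rule exI[of _ 0]) simp
next
  case (step y z)
  obtain t where t: "(nx S ^^ t) x = y" using step by blast
  obtain l where l: "l \<in> S" "y = src l" "z = tgt l" using step(2) unfolding mem_edge_rel by blast
  have "(nx S ^^ Suc t) x = z" using t l nx_eq[OF S l(1)] by simp
  then show ?case by blast
qed

lemma remove_ft:
  assumes S: "S \<in> U j" and w: "w \<in> cls j" and l: "l \<in> S" "src l = w"
    and reach: "\<forall>v\<in>cls j. (v, w) \<in> (edge_rel S src tgt)\<^sup>*"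
  shows "ft w (S - {l})"
proof -
  note SP = U_props[OF S]
  have cw: "cls w = cls j" using cls_eq[OF w] .
  have uq: "\<And>l'. l' \<in> S \<Longrightarrow> src l' = w \<Longrightarrow> l' = l"
  proof -
    fix l' assume "l' \<in> S" "src l' = w"
    have "\<exists>!l. l \<in> S \<and> src l = w" using SP(3) w by blast
    then show "l' = l" using \<open>l' \<in> S\<close> \<open>src l' = w\<close> l by blast
  qed
  define T where "T = S - {l}"
  have F1: "T \<subseteq> {..<r}" using SP(1) T_def by auto
  have F2: "\<forall>l'\<in>T. src l' \<in> cls w \<and> tgt l' \<in> cls w" using SP(2) T_def cw by auto
  have F3: "\<forall>l'\<in>T. src l' \<noteq> w"
  proof
    fix l' assume "l' \<in> T"
    then have "l' \<in> S" "l' \<noteq> l" unfolding T_def by auto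
    then show "src l' \<noteq> w" using uq by blast
  qed
  have F4: "\<forall>v\<in>cls w. v \<noteq> w \<longrightarrow> (\<exists>!l. l \<in> T \<and> src l = v)"
  proof (intro ballI impI)
    fix v assume v: "v \<in> cls w" "v \<noteq> w"
    have "\<exists>!l. l \<in> S \<and> src l = v" using SP(3) v cw by blast
    then obtain l' where l': "l' \<in> S" "src l' = v" "\<forall>l''. l'' \<in> S \<and> src l'' = v \<longrightarrow> l'' = l'"
      by blast
    show "\<exists>!l. l \<in> T \<and> src l = v"
    proof (rule ex1I[of _ l'])
      have "l' \<noteq> l" using l(2) l'(2) v(2) by auto
      then show "l' \<in> T \<and> src l' = v" using l'(1,2) unfolding T_def by auto
      fix l'' assume "l'' \<in> T \<and> src l'' = v"
      then show "l'' = l'" using l'(3) unfolding T_def by blast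
    qed
  qed
  have F5: "\<forall>v\<in>cls w. (v, w) \<in> (edge_rel T src tgt)\<^sup>*"
  proof
    fix v assume v: "v \<in> cls w"
    show "(v, w) \<in> (edge_rel T src tgt)\<^sup>*" unfolding T_def
    proof (rule avoid_rel)
      show "(v, w) \<in> (edge_rel S src tgt)\<^sup>*" using reach v cw by blast
      show "src l = w" by (rule l(2))
      show "\<forall>l'\<in>S. src l' = w \<longrightarrow> l' = l" using uq by blast
    qed
  qed
  show ?thesis unfolding ft_def T_def[symmetric]
    by (rule conjI[OF F1 conjI[OF F2 conjI[OF F3 conjI[OF F4 F5]]]])
qed

lemma insert_U:
  assumes l: "l < r" "tgt l = j" and T: "ft (src l) T"
  shows "insert l T \<in> U j"
proof -
  note P = ft_props[OF T]
  have jC: "j \<in> cls j" by (rule cls_self)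
  have sC: "src l \<in> cls j" using cls_edge2[OF l(1), of j] l(2) jC by simp
  have cs: "cls (src l) = cls j" using cls_eq[OF sC] .
  let ?S = "insert l T"
  have U1: "?S \<subseteq> {..<r}" using P(1) l(1) by auto
  have U2: "\<forall>l'\<in>?S. src l' \<in> cls j \<and> tgt l' \<in> cls j" using P(2) cs sC l(2) jC by auto
  have U3: "\<forall>v\<in>cls j. \<exists>!l'. l' \<in> ?S \<and> src l' = v"
  proof
    fix v assume v: "v \<in> cls j"
    show "\<exists>!l'. l' \<in> ?S \<and> src l' = v"
    proof (cases "v = src l")
      case True
      show ?thesis
      proof (rule ex1I[of _ l])
        show "l \<in> ?S \<and> src l = v" using True by simp
        fix l' assume "l' \<in> ?S \<and> src l' = v"
        then show "l' = l" using P(3) True by auto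
      qed
    next
      case False
      have "\<exists>!l. l \<in> T \<and> src l = v" using P(4) v cs False by blast
      then obtain l' where l': "l' \<in> T" "src l' = v" "\<forall>l''. l'' \<in> T \<and> src l'' = v \<longrightarrow> l'' = l'"
        by blast
      show ?thesis
      proof (rule ex1I[of _ l'])
        show "l' \<in> ?S \<and> src l' = v" using l'(1,2) by simp
        fix l'' assume l'': "l'' \<in> ?S \<and> src l'' = v"
        then have "l'' \<noteq> l" using False by auto
        then have "l'' \<in> T" using l'' by simp
        then show "l'' = l'" using l'(3) l'' by blast
      qed
    qed
  qed
  have U4: "\<forall>v\<in>cls j. (v, j) \<in> (edge_rel ?S src tgt)\<^sup>*"
  proof
    fix v assume v: "v \<in> cls j"
    have "(v, src l) \<in> (edge_rel T src tgt)\<^sup>*" using P(5) v cs by blast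
    then have "(v, src l) \<in> (edge_rel ?S src tgt)\<^sup>*" using rtrancl_edge_mono[of T ?S] by blast
    moreover have "(src l, j) \<in> edge_rel ?S src tgt" unfolding mem_edge_rel using l(2) by blast
    ultimately show "(v, j) \<in> (edge_rel ?S src tgt)\<^sup>*" by (rule rtrancl_into_rtrancl)
  qed
  show ?thesis unfolding U_def mem_Collect_eq
    by (rule conjI[OF U1 conjI[OF U2 conjI[OF U3 U4]]])
qed

lemma cyc_unique:
  assumes S: "S \<in> U j" and l1: "l1 \<in> S" "tgt l1 = j" and l2: "l2 \<in> S" "tgt l2 = j"
    and r1: "\<forall>v\<in>cls j. (v, src l1) \<in> (edge_rel S src tgt)\<^sup>*"
    and r2: "\<forall>v\<in>cls j. (v, src l2) \<in> (edge_rel S src tgt)\<^sup>*"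
  shows "l1 = l2"
proof -
  note SP = U_props[OF S]
  define g where "g = nx S"
  have jC: "j \<in> cls j" by (rule cls_self)
  have g1: "g (src l1) = j" and g2: "g (src l2) = j" unfolding g_def using nx_eq[OF S] l1 l2 by auto
  have e1: "\<exists>t. (g^^t) j = src l1" unfolding g_def by (rule det_reach[OF S jC]) (use r1 jC in blast)
  have e2: "\<exists>t. (g^^t) j = src l2" unfolding g_def by (rule det_reach[OF S jC]) (use r2 jC in blast)
  define n1 where "n1 = (LEAST t. (g^^t) j = src l1)"
  define n2 where "n2 = (LEAST t. (g^^t) j = src l2)"
  have n1: "(g^^n1) j = src l1" unfolding n1_def using LeastI_ex[OF e1] .
  have n2: "(g^^n2) j = src l2" unfolding n2_def using LeastI_ex[OF e2] .
  have m1: "\<And>t. t < n1 \<Longrightarrow> (g^^t) j \<noteq> src l1" unfolding n1_def using not_less_Least by blast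
  have m2: "\<And>t. t < n2 \<Longrightarrow> (g^^t) j \<noteq> src l2" unfolding n2_def using not_less_Least by blast
  have key: "\<And>a b va vb. (g^^a) j = va \<Longrightarrow> g va = j \<Longrightarrow> (g^^b) j = vb \<Longrightarrow>
     (\<And>t. t < b \<Longrightarrow> (g^^t) j \<noteq> vb) \<Longrightarrow> a < b \<Longrightarrow> False"
  proof -
    fix a b va vb assume h: "(g^^a) j = va" "g va = j" "(g^^b) j = vb"
      "\<And>t. t < b \<Longrightarrow> (g^^t) j \<noteq> vb" "a < b"
    have s: "(g^^Suc a) j = j" using h(1,2) by simp
    have "(g^^(b - Suc a)) j = (g^^(b - Suc a)) ((g^^Suc a) j)" using s by simp
    also have "\<dots> = (g^^(b - Suc a + Suc a)) j" by (simp only: funpow_add o_apply)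
    also have "\<dots> = vb" using h(3,5) by simp
    finally show False using h(4)[of "b - Suc a"] h(5) by simp
  qed
  have "n1 = n2"
  proof (rule ccontr)
    assume "n1 \<noteq> n2"
    then have "n1 < n2 \<or> n2 < n1" by auto
    then show False
    proof
      assume "n1 < n2" then show False using key[OF n1 g1 n2 m2] by blast
    next
      assume "n2 < n1" then show False using key[OF n2 g2 n1 m1] by blast
    qed
  qed
  then have "src l1 = src l2" using n1 n2 by simp
  moreover have "src l1 \<in> cls j" using SP(2) l1 by blast
  ultimately have u: "\<exists>!l. l \<in> S \<and> src l = src l1" using SP(3) by blast
  show ?thesis by (rule ex1_uniq[OF u]) (use l1(1) l2(1) \<open>src l1 = src l2\<close> in simp_all)
qed

end

context rgw
begin

lemma in_sum:
  "(\<Sum>l\<in>{l. l < r \<and> tgt l = j}. u l * tree_const r src tgt u (src l)) = (\<Sum>S\<in>U j. \<Prod>l\<in>S. u l)"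
proof -
  define In where "In = {l. l < r \<and> tgt l = j}"
  define Fs where "Fs = (\<lambda>l. {T. ft (src l) T})"
  have fin1: "finite In" unfolding In_def by simp
  have fin2: "\<forall>l\<in>In. finite (Fs l)" unfolding Fs_def using ft_finite by blast
  have jC: "j \<in> cls j" by (rule cls_self)
  have inP: "\<And>p. p \<in> Sigma In Fs \<Longrightarrow> fst p < r \<and> tgt (fst p) = j \<and> ft (src (fst p)) (snd p)"
    unfolding In_def Fs_def by auto
  have "(\<Sum>l\<in>In. u l * tree_const r src tgt u (src l)) = (\<Sum>l\<in>In. \<Sum>T\<in>Fs l. u l * prod u T)"
    unfolding tc_ft Fs_def by (simp add: sum_distrib_left)
  also have "\<dots> = sum (\<lambda>(l, T). u l * prod u T) (Sigma In Fs)" by (rule sum.Sigma[OF fin1 fin2])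
  also have "\<dots> = (\<Sum>p\<in>Sigma In Fs. u (fst p) * prod u (snd p))" by (simp add: split_def)
  also have "\<dots> = (\<Sum>p\<in>Sigma In Fs. prod u (insert (fst p) (snd p)))"
  proof (rule sum.cong[OF refl])
    fix p assume "p \<in> Sigma In Fs"
    then have "ft (src (fst p)) (snd p)" using inP by blast
    then have "fst p \<notin> snd p" "finite (snd p)" using ft_props(3,6) by blast+
    then show "u (fst p) * prod u (snd p) = prod u (insert (fst p) (snd p))" by simp
  qed
  also have "\<dots> = (\<Sum>S\<in>U j. prod u S)"
  proof (rule sum.reindex_bij_betw)
    show "bij_betw (\<lambda>p. insert (fst p) (snd p)) (Sigma In Fs) (U j)"
    proof (rule bij_betwI')
      fix p q assume p: "p \<in> Sigma In Fs" and q: "q \<in> Sigma In Fs"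
      show "(insert (fst p) (snd p) = insert (fst q) (snd q)) = (p = q)"
      proof
        assume e: "insert (fst p) (snd p) = insert (fst q) (snd q)"
        have pp: "fst p < r" "tgt (fst p) = j" "ft (src (fst p)) (snd p)" using inP[OF p] by auto
        have qq: "fst q < r" "tgt (fst q) = j" "ft (src (fst q)) (snd q)" using inP[OF q] by auto
        define S where "S = insert (fst p) (snd p)"
        have S: "S \<in> U j" unfolding S_def by (rule insert_U[OF pp])
        have reachp: "\<forall>v\<in>cls j. (v, src (fst p)) \<in> (edge_rel S src tgt)\<^sup>*"
        proof
          fix v assume v: "v \<in> cls j"
          have "src (fst p) \<in> cls j" using cls_edge2[OF pp(1), of j] pp(2) jC by simp
          then have "v \<in> cls (src (fst p))" using cls_eq v by blast
          then have "(v, src (fst p)) \<in> (edge_rel (snd p) src tgt)\<^sup>*" using ft_props(5)[OF pp(3)] by blast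
          then show "(v, src (fst p)) \<in> (edge_rel S src tgt)\<^sup>*"
            using rtrancl_edge_mono[of "snd p" S] unfolding S_def by blast
        qed
        have reachq: "\<forall>v\<in>cls j. (v, src (fst q)) \<in> (edge_rel S src tgt)\<^sup>*"
        proof
          fix v assume v: "v \<in> cls j"
          have "src (fst q) \<in> cls j" using cls_edge2[OF qq(1), of j] qq(2) jC by simp
          then have "v \<in> cls (src (fst q))" using cls_eq v by blast
          then have "(v, src (fst q)) \<in> (edge_rel (snd q) src tgt)\<^sup>*" using ft_props(5)[OF qq(3)] by blast
          then show "(v, src (fst q)) \<in> (edge_rel S src tgt)\<^sup>*"
            using rtrancl_edge_mono[of "snd q" S] e unfolding S_def by auto
        qed
        have "fst q \<in> S" using e unfolding S_def by simp
        have f: "fst p = fst q"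
          by (rule cyc_unique[OF S _ pp(2) \<open>fst q \<in> S\<close> qq(2) reachp reachq]) (simp add: S_def)
        have "fst p \<notin> snd p" "fst q \<notin> snd q" using ft_props(3)[OF pp(3)] ft_props(3)[OF qq(3)] by blast+
        then have "snd p = snd q" using e f by (metis insert_ident)
        then show "p = q" using f by (simp add: prod_eq_iff)
      qed simp
    next
      fix p assume p: "p \<in> Sigma In Fs"
      have pp: "fst p < r" "tgt (fst p) = j" "ft (src (fst p)) (snd p)" using inP[OF p] by auto
      show "insert (fst p) (snd p) \<in> U j" by (rule insert_U[OF pp])
    next
      fix S assume S: "S \<in> U j"
      note SP = U_props[OF S]
      define g where "g = nx S"
      define l0 where "l0 = (THE l. l \<in> S \<and> src l = j)"
      have l0: "l0 \<in> S" "src l0 = j" using the_out[OF S jC] unfolding l0_def by auto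
      have gj: "g j = tgt l0" unfolding g_def using nx_eq[OF S l0(1)] l0(2) by simp
      have gjC: "g j \<in> cls j" using SP(2) l0 gj by auto
      have "(g j, j) \<in> (edge_rel S src tgt)\<^sup>*" using SP(4) gjC by blast
      then obtain t where t: "(g^^t) (g j) = j" using det_reach[OF S gjC] unfolding g_def by blast
      define w where "w = (g^^t) j"
      have wC: "w \<in> cls j" and jw: "(j, w) \<in> (edge_rel S src tgt)\<^sup>*"
        using iter_reach[OF S jC, of t] unfolding w_def g_def by auto
      define l where "l = (THE l. l \<in> S \<and> src l = w)"
      have l: "l \<in> S" "src l = w" using the_out[OF S wC] unfolding l_def by auto
      have "g w = tgt l" unfolding g_def using nx_eq[OF S l(1)] l(2) by simp
      moreover have "g w = j" using t unfolding w_def by (simp add: funpow_swap1)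
      ultimately have tl: "tgt l = j" by simp
      have reach: "\<forall>v\<in>cls j. (v, w) \<in> (edge_rel S src tgt)\<^sup>*"
      proof
        fix v assume "v \<in> cls j"
        then have "(v, j) \<in> (edge_rel S src tgt)\<^sup>*" using SP(4) by blast
        then show "(v, w) \<in> (edge_rel S src tgt)\<^sup>*" using jw by (rule rtrancl_trans)
      qed
      have ftT: "ft w (S - {l})" by (rule remove_ft[OF S wC l reach])
      have lr: "l < r" using SP(1) l(1) by auto
      have m: "(l, S - {l}) \<in> Sigma In Fs" unfolding In_def Fs_def using lr tl ftT l(2) by simp
      have "S = insert (fst (l, S - {l})) (snd (l, S - {l}))" using l(1) by auto
      then show "\<exists>p\<in>Sigma In Fs. S = insert (fst p) (snd p)" using m by (rule rev_bexI[rotated])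
    qed
  qed
  finally show ?thesis unfolding In_def .
qed

lemma stationary:
  "(\<Sum>l\<in>{l. l < r \<and> src l = j}. u l) * tree_const r src tgt u j =
   (\<Sum>l\<in>{l. l < r \<and> tgt l = j}. u l * tree_const r src tgt u (src l))"
  using out_sum in_sum by simp

end

context rgw
begin

lemma kern_zero:
  fixes u w :: "nat \<Rightarrow> real"
  assumes u: "\<And>l. l < r \<Longrightarrow> u l > 0"
    and wnn: "\<forall>v\<in>cls a. w v \<ge> 0"
    and bal: "\<forall>j\<in>cls a. (\<Sum>l\<in>{l. l < r \<and> src l = j}. u l) * w j = (\<Sum>l\<in>{l. l < r \<and> tgt l = j}. u l * w (src l))"
    and v0: "v0 \<in> cls a" "w v0 = 0"
  shows "\<forall>v\<in>cls a. w v = 0"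
proof -
  have pred: "\<And>y l. y \<in> cls a \<Longrightarrow> w y = 0 \<Longrightarrow> l < r \<Longrightarrow> tgt l = y \<Longrightarrow> w (src l) = 0"
  proof -
    fix y l assume y: "y \<in> cls a" "w y = 0" and l: "l < r" "tgt l = y"
    have "(\<Sum>l\<in>{l. l < r \<and> src l = y}. u l) * w y = (\<Sum>l\<in>{l. l < r \<and> tgt l = y}. u l * w (src l))"
      by (rule bspec[OF bal y(1)])
    then have "(\<Sum>l\<in>{l. l < r \<and> tgt l = y}. u l * w (src l)) = (\<Sum>l\<in>{l. l < r \<and> src l = y}. u l) * w y"
      by (rule sym)
    also have "\<dots> = 0" using y(2) by simp
    finally have eq0: "(\<Sum>l\<in>{l. l < r \<and> tgt l = y}. u l * w (src l)) = 0" .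
    have nn: "\<forall>l'\<in>{l. l < r \<and> tgt l = y}. 0 \<le> u l' * w (src l')"
    proof
      fix l' assume "l' \<in> {l. l < r \<and> tgt l = y}"
      then have l': "l' < r" "tgt l' = y" by auto
      have "src l' \<in> cls a" using cls_edge2[OF l'(1), of a] l'(2) y(1) by simp
      then have "w (src l') \<ge> 0" using wnn by blast
      moreover have "u l' \<ge> 0" using u[OF l'(1)] by simp
      ultimately show "0 \<le> u l' * w (src l')" by simp
    qed
    have fin: "finite {l. l < r \<and> tgt l = y}" by simp
    have all0: "\<forall>l'\<in>{l. l < r \<and> tgt l = y}. u l' * w (src l') = 0"
      using sum_nonneg_eq_0_iff[OF fin, of "\<lambda>l'. u l' * w (src l')"] nn eq0 by simp
    have lin: "l \<in> {l. l < r \<and> tgt l = y}" using l by simp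
    have "u l * w (src l) = 0" by (rule bspec[OF all0 lin])
    then show "w (src l) = 0" using u[OF l(1)] by simp
  qed
  show ?thesis
  proof
    fix v assume v: "v \<in> cls a"
    have cv: "cls v0 = cls a" by (rule cls_eq[OF v0(1)])
    have "v \<in> cls v0" using v unfolding cv .
    then have "(v, v0) \<in> E\<^sup>*" by (rule strong_conn2)
    then have "v \<in> cls a \<and> w v = 0"
    proof (induct rule: converse_rtrancl_induct)
      case base then show ?case using v0 by simp
    next
      case (step x y)
      obtain l where l: "l \<in> {..<r}" "x = src l" "y = tgt l" using step(1) unfolding mem_edge_rel by blast
      have lr: "l < r" using l(1) by simp
      have yC: "y \<in> cls a" and wy: "w y = 0" using step(3) by auto
      have tC: "tgt l \<in> cls a" using yC l(3) by simp
      have "src l \<in> cls a" by (rule cls_edge2[OF lr tC])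
      moreover have "w (src l) = 0" by (rule pred[OF yC wy lr]) (use l(3) in simp)
      ultimately show ?case using l(2) by simp
    qed
    then show "w v = 0" by simp
  qed
qed

lemma ratio:
  fixes u z :: "nat \<Rightarrow> real"
  assumes u: "\<And>l. l < r \<Longrightarrow> u l > 0"
    and z: "\<forall>v\<in>cls a. z v > 0"
    and bal: "\<forall>j\<in>cls a. (\<Sum>l\<in>{l. l < r \<and> src l = j}. u l) * z j = (\<Sum>l\<in>{l. l < r \<and> tgt l = j}. u l * z (src l))"
    and b: "b \<in> cls a"
  shows "z a * tree_const r src tgt u b = z b * tree_const r src tgt u a"
proof -
  define K where "K = tree_const r src tgt u"
  have Kpos: "\<And>v. K v > 0" unfolding K_def using tc_pos u by blast
  have Kbal: "\<And>j. (\<Sum>l\<in>{l. l < r \<and> src l = j}. u l) * K j = (\<Sum>l\<in>{l. l < r \<and> tgt l = j}. u l * K (src l))"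
    unfolding K_def by (rule stationary)
  define C where "C = cls a"
  have fC: "finite C" unfolding C_def by (rule cls_finite)
  have aC: "a \<in> C" unfolding C_def by (rule cls_self)
  define f where "f = (\<lambda>v. z v / K v)"
  define t where "t = Min (f ` C)"
  have "t \<in> f ` C" unfolding t_def using fC aC by (intro Min_in) auto
  then obtain v0 where v0: "v0 \<in> C" "f v0 = t" by auto
  have tle: "\<And>v. v \<in> C \<Longrightarrow> t \<le> f v" unfolding t_def using fC by (intro Min_le) auto
  define w where "w = (\<lambda>v. z v - t * K v)"
  have wnn: "\<forall>v\<in>cls a. w v \<ge> 0"
  proof
    fix v assume "v \<in> cls a"
    then have "t \<le> z v / K v" using tle unfolding f_def C_def by blast
    then have "t * K v \<le> z v" using Kpos[of v] by (simp add: le_divide_eq)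
    then show "w v \<ge> 0" unfolding w_def by simp
  qed
  have w0: "w v0 = 0" unfolding w_def using v0 Kpos[of v0] unfolding f_def by (simp add: field_simps)
  have wbal: "\<forall>j\<in>cls a. (\<Sum>l\<in>{l. l < r \<and> src l = j}. u l) * w j = (\<Sum>l\<in>{l. l < r \<and> tgt l = j}. u l * w (src l))"
  proof
    fix j assume j: "j \<in> cls a"
    have "(\<Sum>l\<in>{l. l < r \<and> src l = j}. u l) * w j =
      (\<Sum>l\<in>{l. l < r \<and> src l = j}. u l) * z j - t * ((\<Sum>l\<in>{l. l < r \<and> src l = j}. u l) * K j)"
      unfolding w_def by (simp add: algebra_simps)
    also have "\<dots> = (\<Sum>l\<in>{l. l < r \<and> tgt l = j}. u l * z (src l)) - t * (\<Sum>l\<in>{l. l < r \<and> tgt l = j}. u l * K (src l))"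
      using bal j Kbal[of j] by simp
    also have "\<dots> = (\<Sum>l\<in>{l. l < r \<and> tgt l = j}. u l * w (src l))"
      unfolding w_def by (simp add: algebra_simps sum_subtractf sum_distrib_left)
    finally show "(\<Sum>l\<in>{l. l < r \<and> src l = j}. u l) * w j = (\<Sum>l\<in>{l. l < r \<and> tgt l = j}. u l * w (src l))" .
  qed
  have "\<forall>v\<in>cls a. w v = 0" by (rule kern_zero[OF u wnn wbal]) (use v0 w0 C_def in auto)
  then have zK: "\<And>v. v \<in> cls a \<Longrightarrow> z v = t * K v" unfolding w_def by auto
  show ?thesis using zK[of a] zK[OF b] aC unfolding C_def K_def[symmetric] by simp
qed

end

lemma sum_fun_apply: "(\<Sum>j\<in>A. f j) s = (\<Sum>j\<in>A. (f j s :: real))"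
  by (induct A rule: infinite_finite_induct) auto

definition pm :: "nat \<Rightarrow> (nat \<Rightarrow> real) \<Rightarrow> (nat \<Rightarrow> real) \<Rightarrow> real" where
  "pm m x v = exp (\<Sum>s<m. v s * ln (x s))"

lemma pm_monom:
  assumes "\<forall>s<m. x s > 0"
  shows "monom m x v = pm m x (cvec m v)"
proof -
  have "pm m x (cvec m v) = (\<Prod>s<m. exp (real (v s) * ln (x s)))"
    unfolding pm_def cvec_def by (simp add: exp_sum)
  also have "\<dots> = (\<Prod>s<m. x s ^ v s)"
  proof (rule prod.cong[OF refl])
    fix s assume "s \<in> {..<m}"
    then have "x s > 0" using assms by simp
    then show "exp (real (v s) * ln (x s)) = x s ^ v s" by (simp add: exp_of_nat_mult)
  qed
  finally show ?thesis unfolding monom_def by simp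
qed

lemma pm_pos: "pm m x v > 0" unfolding pm_def by simp

lemma pm_zero: "pm m x 0 = 1" unfolding pm_def by simp

lemma pm_diff: "pm m x (v - w) = pm m x v / pm m x w"
  unfolding pm_def by (simp add: left_diff_distrib sum_subtractf exp_diff)

lemma pm_add: "pm m x (v + w) = pm m x v * pm m x w"
  unfolding pm_def by (simp add: distrib_right sum.distrib exp_add)

lemma pm_scale: "pm m x (fscale c v) = pm m x v powr c"
proof -
  have "pm m x v powr c = exp (c * (\<Sum>s<m. v s * ln (x s)))"
    unfolding pm_def powr_def by simp
  also have "\<dots> = pm m x (fscale c v)"
    unfolding pm_def fscale_def by (simp add: sum_distrib_left mult.assoc)
  finally show ?thesis by simp
qed

lemma pm_sum:
  assumes "finite A"
  shows "pm m x (\<Sum>j\<in>A. f j) = (\<Prod>j\<in>A. pm m x (f j))"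
  using assms
proof (induct A rule: finite_induct)
  case empty then show ?case unfolding pm_def by simp
next
  case (insert a A)
  have "sum f (insert a A) = f a + sum f A" by (rule sum.insert[OF insert(1,2)])
  then have e1: "pm m x (sum f (insert a A)) = pm m x (f a) * pm m x (sum f A)" by (simp only: pm_add)
  have e2: "(\<Prod>j\<in>insert a A. pm m x (f j)) = pm m x (f a) * (\<Prod>j\<in>A. pm m x (f j))"
    by (rule prod.insert[OF insert(1,2)])
  show ?case unfolding e1 e2 insert(3) ..
qed

lemma defic_zero:
  fixes psi :: "nat \<Rightarrow> real"
  assumes cr: "\<forall>l<r. trho l < nt \<and> trho' l < nt" and d0: "struct_deficiency m nt r ty trho trho' = 0"
    and eq: "\<forall>s<m. (\<Sum>l<r. psi l * (real (ty (trho' l) s) - real (ty (trho l) s))) = 0"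
  shows "(\<Sum>l<r. psi l * incidence_col trho trho' l j) = 0"
proof -
  interpret vs: vector_space fscale by (rule vector_space_fscale)
  define G where "G = incidence_col trho trho' ` {..<r}"
  define V where "V = (\<Sum>l<r. fscale (psi l) (incidence_col trho trho' l))"
  have Vj: "\<And>j. V j = (\<Sum>l<r. psi l * incidence_col trho trho' l j)"
    unfolding V_def sum_fun_apply fscale_def by simp
  have Vspan: "V \<in> fspan G" unfolding V_def G_def
    by (intro vs.span_sum vs.span_scale vs.span_base) auto
  have inc_sum: "\<And>l t. l < r \<Longrightarrow> (\<Sum>j<nt. incidence_col trho trho' l j * t j) = t (trho' l) - t (trho l)"
  proof -
    fix l and t :: "nat \<Rightarrow> real" assume l: "l < r"
    have "(\<Sum>j<nt. incidence_col trho trho' l j * t j) =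
        (\<Sum>j<nt. (if j = trho' l then t j else 0)) - (\<Sum>j<nt. (if j = trho l then t j else 0))"
    proof -
      have "\<And>j. incidence_col trho trho' l j * t j = (if j = trho' l then t j else 0) - (if j = trho l then t j else 0)"
        unfolding incidence_col_def by simp
      then show ?thesis by (simp add: sum_subtractf)
    qed
    also have "\<dots> = t (trho' l) - t (trho l)" using cr l by (simp add: sum.delta')
    finally show "(\<Sum>j<nt. incidence_col trho trho' l j * t j) = t (trho' l) - t (trho l)" .
  qed
  have Vker: "V \<in> kerY m nt ty" unfolding kerY_def
  proof (intro CollectI conjI allI impI)
    fix j assume j: "nt \<le> j"
    have "\<And>l. l < r \<Longrightarrow> incidence_col trho trho' l j = 0"
      using cr j unfolding incidence_col_def by fastforce
    then show "V j = 0" unfolding Vj by simp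
  next
    fix s assume s: "s < m"
    have "(\<Sum>j<nt. V j * real (ty j s)) = (\<Sum>j<nt. \<Sum>l<r. psi l * (incidence_col trho trho' l j * real (ty j s)))"
      unfolding Vj by (simp add: sum_distrib_right mult.assoc)
    also have "\<dots> = (\<Sum>l<r. psi l * (\<Sum>j<nt. incidence_col trho trho' l j * real (ty j s)))"
      by (subst sum.swap) (simp add: sum_distrib_left)
    also have "\<dots> = (\<Sum>l<r. psi l * (real (ty (trho' l) s) - real (ty (trho l) s)))"
      by (rule sum.cong[OF refl]) (simp add: inc_sum)
    also have "\<dots> = 0" using eq s by simp
    finally show "(\<Sum>j<nt. V j * real (ty j s)) = 0" .
  qed
  define W where "W = kerY m nt ty \<inter> fspan G"
  have VW: "V \<in> W" unfolding W_def using Vker Vspan by simp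
  have dimW: "vs.dim W = 0" using d0 unfolding struct_deficiency_def W_def G_def by simp
  obtain B where B: "B \<subseteq> W" "vs.independent B" "W \<subseteq> vs.span B" "card B = vs.dim W"
    by (rule vs.basis_exists)
  have "B \<subseteq> vs.span G" using B(1) unfolding W_def by auto
  moreover have "finite G" unfolding G_def by simp
  ultimately have "finite B" using vs.independent_span_bound B(2) by blast
  then have "B = {}" using B(4) dimW by simp
  then have "W \<subseteq> {0}" using B(3) by simp
  then have "V = 0" using VW by auto
  then show ?thesis using Vj[of j] by simp
qed

lemma sum_filter_lt: "(\<Sum>l<(r::nat). if P l then f l else (0::real)) = (\<Sum>l\<in>{l. l < r \<and> P l}. f l)"
proof -
  have "{l. l < r \<and> P l} = {l \<in> {..<r}. P l}" by auto
  moreover have "sum f {l \<in> {..<r}. P l} = (\<Sum>l<r. if P l then f l else 0)" by (rule sum.inter_filter) simp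
  ultimately show ?thesis by simp
qed

lemma monom_pos: "\<forall>s<m. x s > 0 \<Longrightarrow> monom m x v > 0"
  unfolding monom_def by (auto intro!: prod_pos)

lemma gmas_cong:
  assumes "\<forall>l<r. phi l = psi l"
  shows "gmas_rhs m r y ty trho trho' kap phi x s = gmas_rhs m r y ty trho trho' kap psi x s"
  unfolding gmas_rhs_def using assms by (intro sum.cong) auto

lemma bal_of_zero:
  fixes phi :: "nat \<Rightarrow> real"
  assumes cr: "\<forall>l<r. trho l < nt \<and> trho' l < nt" and d0: "struct_deficiency m nt r ty trho trho' = 0"
    and zero: "\<forall>s<m. gmas_rhs m r y ty trho trho' kap phi x s = 0"
  shows "(\<Sum>l\<in>{l. l < r \<and> trho l = j}. phi l) * monom m x (y (kap j)) =
         (\<Sum>l\<in>{l. l < r \<and> trho' l = j}. phi l * monom m x (y (kap (trho l))))"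
proof -
  define psi where "psi = (\<lambda>l. phi l * monom m x (y (kap (trho l))))"
  have eq: "\<forall>s<m. (\<Sum>l<r. psi l * (real (ty (trho' l) s) - real (ty (trho l) s))) = 0"
  proof (intro allI impI)
    fix s assume s: "s < m"
    have "(\<Sum>l<r. psi l * (real (ty (trho' l) s) - real (ty (trho l) s))) = gmas_rhs m r y ty trho trho' kap phi x s"
      unfolding gmas_rhs_def psi_def by (intro sum.cong) (auto simp: mult_ac)
    then show "(\<Sum>l<r. psi l * (real (ty (trho' l) s) - real (ty (trho l) s))) = 0" using zero s by simp
  qed
  have "(\<Sum>l<r. psi l * incidence_col trho trho' l j) = 0" by (rule defic_zero[OF cr d0 eq])
  moreover have "(\<Sum>l<r. psi l * incidence_col trho trho' l j) =
      (\<Sum>l<r. if trho' l = j then psi l else 0) - (\<Sum>l<r. if trho l = j then psi l else 0)"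
    unfolding incidence_col_def by (simp add: sum_subtractf[symmetric] right_diff_distrib) (intro sum.cong, auto)
  ultimately have "(\<Sum>l<r. if trho' l = j then psi l else 0) = (\<Sum>l<r. if trho l = j then psi l else 0)" by simp
  then have e: "(\<Sum>l\<in>{l. l < r \<and> trho' l = j}. psi l) = (\<Sum>l\<in>{l. l < r \<and> trho l = j}. psi l)"
    unfolding sum_filter_lt .
  have "(\<Sum>l\<in>{l. l < r \<and> trho l = j}. psi l) = (\<Sum>l\<in>{l. l < r \<and> trho l = j}. phi l) * monom m x (y (kap j))"
    unfolding psi_def sum_distrib_right by (intro sum.cong) auto
  then show ?thesis using e unfolding psi_def by simp
qed


theorem lemma4p3:
  fixes m n r nt sd :: nat
    and y ty :: "nat \<Rightarrow> nat \<Rightarrow> nat"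
    and rho rho' trho trho' h1 h2 kap p q :: "nat \<Rightarrow> nat"
    and CRK :: "nat set"
    and k :: "nat \<Rightarrow> real"
    and c :: "nat \<Rightarrow> nat \<Rightarrow> real"
  assumes crn: "is_crn m n r y rho rho'"
    and kpos: "\<forall>i<r. k i > 0"
    and transl: "is_translation m n r y rho rho' nt ty trho trho' h1 h2 CRK kap"
    and improper: "\<not> inj_on h2 (reactant_set r rho)"
    and basis: "adapted_basis m r y rho trho trho' h2 CRK kap sd p q c"
    and strong: "strongly_resolvable m r y rho trho trho' h1 h2 CRK kap sd p q c k"
    and defic0: "struct_deficiency m nt r ty trho trho' = 0"
  shows "pos_steady_states m
           (gmas_rhs m r y ty trho trho' kap (translated_rates r rho trho trho' h1 h2 CRK sd p q c k))
         = pos_steady_states m (mas_rhs m r y rho rho' k)"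
proof -
  have tcrn: "is_crn m nt r ty trho trho'" and h1bij: "bij_betw h1 {..<r} {..<r}"
    and rv: "\<forall>i<r. \<forall>s<m. int (ty (trho' (h1 i)) s) - int (ty (trho (h1 i)) s)
                  = int (y (rho' i) s) - int (y (rho i) s)"
    and h2img: "h2 ` reactant_set r rho = reactant_set r trho"
    and h2r: "\<forall>i<r. h2 (rho i) = trho (h1 i)"
    and CRKsub: "CRK \<subseteq> reactant_set r rho"
    and kapP: "\<forall>j\<in>reactant_set r trho. {c \<in> reactant_set r rho. h2 c = j} \<inter> CRK = {kap j}"
    using transl unfolding is_translation_def by blast+
  have cr: "\<forall>l<r. trho l < nt \<and> trho' l < nt" and nl: "\<And>l. l < r \<Longrightarrow> trho l \<noteq> trho' l"
    using tcrn unfolding is_crn_def by blast+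
  have wres: "weakly_resolvable m r y rho trho trho' h2 CRK kap"
    and inv: "\<forall>i\<in>improper_reactions r rho CRK. \<forall>W W'.
        semi_proper_weights r rho CRK k W \<and> semi_proper_weights r rho CRK k W' \<longrightarrow>
        adj_factor r trho trho' h1 h2 sd p q c W i = adj_factor r trho trho' h1 h2 sd p q c W' i"
    using strong unfolding strongly_resolvable_def by blast+
  have WR: "weakly_reversible r trho trho'" using wres unfolding weakly_resolvable_def by blast
  interpret G: rgw r trho trho' by unfold_locales (use nl WR in auto)
  have bas: "\<forall>j<sd. p j \<in> CRK \<and> q j \<in> CRK \<and> h2 (q j) \<in> linkage_class r trho trho' (h2 (p j))"
    and bvec: "\<forall>i\<in>improper_reactions r rho CRK.
        improper_vec m y rho h2 kap i = (\<Sum>j<sd. fscale (c i j) (cvec m (y (p j)) - cvec m (y (q j))))"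
    using basis unfolding adapted_basis_def by blast+
  have kapfix: "\<And>d. d \<in> CRK \<Longrightarrow> kap (h2 d) = d"
  proof -
    fix d assume d: "d \<in> CRK"
    have dr: "d \<in> reactant_set r rho" using d CRKsub by blast
    have "h2 d \<in> reactant_set r trho" using h2img dr by blast
    then have "{c \<in> reactant_set r rho. h2 c = h2 d} \<inter> CRK = {kap (h2 d)}" using kapP by blast
    moreover have "d \<in> {c \<in> reactant_set r rho. h2 c = h2 d} \<inter> CRK" using d dr by simp
    ultimately show "kap (h2 d) = d" by simp
  qed
  define hi where "hi = the_inv_into {..<r} h1"
  have h1inj: "inj_on h1 {..<r}" using h1bij bij_betw_def by blast
  have h1r: "\<And>i. i < r \<Longrightarrow> h1 i < r" using h1bij unfolding bij_betw_def by auto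
  have hi1: "\<And>l. l < r \<Longrightarrow> hi l < r"
    unfolding hi_def using the_inv_into_into[OF h1inj] h1bij unfolding bij_betw_def by auto
  have hi2: "\<And>l. l < r \<Longrightarrow> h1 (hi l) = l"
    unfolding hi_def using f_the_inv_into_f_bij_betw[OF h1bij] by simp
  have hi3: "\<And>i. i < r \<Longrightarrow> hi (h1 i) = i"
    unfolding hi_def using the_inv_into_f_f[OF h1inj] by simp
  define Imp where "Imp = improper_reactions r rho CRK"
  define e where "e = improper_vec m y rho h2 kap"
  have Imp_iff: "\<And>i. i \<in> Imp \<longleftrightarrow> i < r \<and> rho i \<notin> CRK" unfolding Imp_def improper_reactions_def by simp
  have eprop: "\<And>i. i < r \<Longrightarrow> i \<notin> Imp \<Longrightarrow> e i = 0"
  proof -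
    fix i assume "i < r" "i \<notin> Imp"
    then have "rho i \<in> CRK" using Imp_iff by blast
    then show "e i = 0" unfolding e_def improper_vec_def using kapfix by simp
  qed
  define adj where "adj = adj_factor r trho trho' h1 h2 sd p q c"
  define sp where "sp = semi_proper_weights r rho CRK k"
  have sp_iff: "\<And>W. sp W \<longleftrightarrow> (\<forall>i<r. i \<notin> Imp \<longrightarrow> W i = k i) \<and> (\<forall>i\<in>Imp. W i > 0)"
    unfolding sp_def semi_proper_weights_def Imp_def ..
  have sp_pos: "\<And>W i. sp W \<Longrightarrow> i < r \<Longrightarrow> W i > 0"
    using sp_iff kpos by metis
  have adj_eq: "\<And>W. adj W = (\<lambda>i. \<Prod>j<sd. (tree_const r trho trho' (\<lambda>l. W (hi l)) (h2 (p j)) /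
       tree_const r trho trho' (\<lambda>l. W (hi l)) (h2 (q j))) powr (c i j))"
    unfolding adj_def adj_factor_def hi_def Let_def by simp
  define z where "z = (\<lambda>x j. monom m x (y (kap j)))"
  have KL: "\<And>W x i. sp W \<Longrightarrow> \<forall>s<m. x s > 0 \<Longrightarrow>
      (\<forall>j. (\<Sum>l\<in>{l. l < r \<and> trho l = j}. W (hi l)) * z x j =
         (\<Sum>l\<in>{l. l < r \<and> trho' l = j}. W (hi l) * z x (trho l))) \<Longrightarrow> i \<in> Imp \<Longrightarrow>
      pm m x (e i) = adj W i"
  proof -
    fix W x i assume W: "sp W" and xpos: "\<forall>s<m. x s > 0"
      and bal: "\<forall>j. (\<Sum>l\<in>{l. l < r \<and> trho l = j}. W (hi l)) * z x j =
         (\<Sum>l\<in>{l. l < r \<and> trho' l = j}. W (hi l) * z x (trho l))" and i: "i \<in> Imp"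
    define u where "u = (\<lambda>l. W (hi l))"
    define K where "K = tree_const r trho trho' u"
    have upos: "\<And>l. l < r \<Longrightarrow> u l > 0" unfolding u_def using sp_pos[OF W] hi1 by blast
    have Kpos: "\<And>v. K v > 0" unfolding K_def using G.tc_pos upos by blast
    have zpos: "\<And>v. z x v > 0" unfolding z_def using monom_pos xpos by blast
    define b where "b = (\<lambda>j. cvec m (y (p j)) - cvec m (y (q j)))"
    have rat: "\<And>j. j < sd \<Longrightarrow> pm m x (b j) = K (h2 (p j)) / K (h2 (q j))"
    proof -
      fix j assume j: "j < sd"
      have pq: "p j \<in> CRK" "q j \<in> CRK" "h2 (q j) \<in> linkage_class r trho trho' (h2 (p j))" using bas j by auto
      have "pm m x (b j) = pm m x (cvec m (y (p j))) / pm m x (cvec m (y (q j)))" unfolding b_def by (rule pm_diff)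
      also have "\<dots> = z x (h2 (p j)) / z x (h2 (q j))" unfolding z_def using kapfix pq pm_monom[OF xpos] by simp
      also have "\<dots> = K (h2 (p j)) / K (h2 (q j))"
      proof -
        have eq: "z x (h2 (p j)) * K (h2 (q j)) = z x (h2 (q j)) * K (h2 (p j))"
          unfolding K_def
        proof (rule G.ratio[OF upos])
          show "\<forall>v\<in>G.cls (h2 (p j)). z x v > 0" using zpos by blast
          show "\<forall>j'\<in>G.cls (h2 (p j)). (\<Sum>l\<in>{l. l < r \<and> trho l = j'}. u l) * z x j' =
              (\<Sum>l\<in>{l. l < r \<and> trho' l = j'}. u l * z x (trho l))" using bal unfolding u_def by blast
          show "h2 (q j) \<in> G.cls (h2 (p j))" using pq(3) .
        qed
        have n1: "z x (h2 (q j)) \<noteq> 0" and n2: "K (h2 (q j)) \<noteq> 0" using zpos Kpos by (metis less_irrefl)+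
        show ?thesis using frac_eq_eq[OF n1 n2, of "z x (h2 (p j))" "K (h2 (p j))"] eq by (simp add: mult.commute)
      qed
      finally show "pm m x (b j) = K (h2 (p j)) / K (h2 (q j))" .
    qed
    have "pm m x (e i) = pm m x (\<Sum>j<sd. fscale (c i j) (b j))"
      using bvec i unfolding e_def Imp_def b_def by simp
    also have "\<dots> = (\<Prod>j<sd. pm m x (b j) powr c i j)" by (simp add: pm_sum pm_scale)
    also have "\<dots> = (\<Prod>j<sd. (K (h2 (p j)) / K (h2 (q j))) powr c i j)" by (rule prod.cong) (simp_all add: rat)
    also have "\<dots> = adj W i" unfolding adj_eq K_def u_def by simp
    finally show "pm m x (e i) = adj W i" .
  qed

  define kt where "kt = translated_rates r rho trho trho' h1 h2 CRK sd p q c k"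
  define W' where "W' = (\<lambda>i. if i \<in> Imp then adj k i * k i else k i)"
  have kt_eq: "\<And>l. kt l = W' (hi l)"
    unfolding kt_def translated_rates_def W'_def adj_def hi_def Imp_def Let_def by simp
  have ksp: "sp k" unfolding sp_iff using Imp_iff kpos by auto
  have adjpos: "\<And>i. adj k i > 0"
  proof -
    fix i
    have upos: "\<And>l. l < r \<Longrightarrow> k (hi l) > 0" using kpos hi1 by blast
    have Kp: "\<And>v. tree_const r trho trho' (\<lambda>l. k (hi l)) v > 0" by (rule G.tc_pos) (rule upos)
    show "adj k i > 0" unfolding adj_eq
    proof (rule prod_pos)
      fix j assume "j \<in> {..<sd}"
      have "tree_const r trho trho' (\<lambda>l. k (hi l)) (h2 (p j)) / tree_const r trho trho' (\<lambda>l. k (hi l)) (h2 (q j)) > 0"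
        by (rule divide_pos_pos[OF Kp Kp])
      then show "0 < (tree_const r trho trho' (\<lambda>l. k (hi l)) (h2 (p j)) / tree_const r trho trho' (\<lambda>l. k (hi l)) (h2 (q j))) powr c i j"
        by (simp add: powr_gt_zero del: divide_eq_0_iff)
    qed
  qed
  have W'sp: "sp W'" unfolding sp_iff W'_def using Imp_iff kpos adjpos by auto
  have adjinv: "\<And>W i. sp W \<Longrightarrow> i \<in> Imp \<Longrightarrow> adj W i = adj k i"
    using inv ksp unfolding adj_def sp_def Imp_def by blast
  have Mrhs: "\<And>x s. \<forall>s<m. x s > 0 \<Longrightarrow> s < m \<Longrightarrow> mas_rhs m r y rho rho' k x s =
      gmas_rhs m r y ty trho trho' kap (\<lambda>l. k (hi l) * pm m x (e (hi l))) x s"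
  proof -
    fix x :: "nat \<Rightarrow> real" and s :: nat assume xpos: "\<forall>s<m. x s > 0" and s: "s < m"
    define g where "g = (\<lambda>l. k (hi l) * pm m x (e (hi l)) * (real (ty (trho' l) s) - real (ty (trho l) s))
       * monom m x (y (kap (trho l))))"
    have "gmas_rhs m r y ty trho trho' kap (\<lambda>l. k (hi l) * pm m x (e (hi l))) x s = (\<Sum>l<r. g l)"
      unfolding gmas_rhs_def g_def by simp
    also have "\<dots> = (\<Sum>i<r. g (h1 i))" by (rule sum.reindex_bij_betw[OF h1bij, symmetric])
    also have "\<dots> = (\<Sum>i<r. k i * (real (y (rho' i) s) - real (y (rho i) s)) * monom m x (y (rho i)))"
    proof (rule sum.cong[OF refl])
      fix i assume "i \<in> {..<r}"
      then have ir: "i < r" by simp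
      have a: "hi (h1 i) = i" by (rule hi3[OF ir])
      have bb: "trho (h1 i) = h2 (rho i)" using h2r ir by simp
      have ie: "int (ty (trho' (h1 i)) s) - int (ty (trho (h1 i)) s) = int (y (rho' i) s) - int (y (rho i) s)"
        using rv ir s by blast
      have cc: "real (ty (trho' (h1 i)) s) - real (ty (trho (h1 i)) s) = real (y (rho' i) s) - real (y (rho i) s)"
      proof -
        have "real_of_int (int (ty (trho' (h1 i)) s) - int (ty (trho (h1 i)) s)) =
              real_of_int (int (y (rho' i) s) - int (y (rho i) s))" using ie by simp
        then show ?thesis by simp
      qed
      have ev: "e i + cvec m (y (kap (h2 (rho i)))) = cvec m (y (rho i))"
        unfolding e_def improper_vec_def by simp
      have d: "pm m x (e i) * monom m x (y (kap (h2 (rho i)))) = monom m x (y (rho i))"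
        unfolding pm_monom[OF xpos] pm_add[symmetric] ev ..
      have "g (h1 i) = k i * (pm m x (e i) * monom m x (y (kap (h2 (rho i))))) * (real (y (rho' i) s) - real (y (rho i) s))"
        using cc unfolding g_def a bb by (simp add: mult_ac)
      then show "g (h1 i) = k i * (real (y (rho' i) s) - real (y (rho i) s)) * monom m x (y (rho i))"
        unfolding d by (simp add: mult_ac)
    qed
    also have "\<dots> = mas_rhs m r y rho rho' k x s" unfolding mas_rhs_def by simp
    finally show "mas_rhs m r y rho rho' k x s =
      gmas_rhs m r y ty trho trho' kap (\<lambda>l. k (hi l) * pm m x (e (hi l))) x s" by simp
  qed
  have main: "\<And>x. \<forall>s<m. x s > 0 \<Longrightarrow>
     (\<forall>s<m. gmas_rhs m r y ty trho trho' kap kt x s = 0) \<longleftrightarrow> (\<forall>s<m. mas_rhs m r y rho rho' k x s = 0)"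
  proof -
    fix x :: "nat \<Rightarrow> real" assume xpos: "\<forall>s<m. x s > 0"
    define Wx where "Wx = (\<lambda>i. k i * pm m x (e i))"
    have Wxsp: "sp Wx" unfolding sp_iff
    proof (intro conjI allI impI ballI)
      fix i assume "i < r" "i \<notin> Imp"
      then show "Wx i = k i" unfolding Wx_def using eprop pm_zero by simp
    next
      fix i assume "i \<in> Imp"
      then have "k i > 0" using Imp_iff kpos by blast
      then show "Wx i > 0" unfolding Wx_def using pm_pos by simp
    qed
    have M: "\<And>s. s < m \<Longrightarrow> mas_rhs m r y rho rho' k x s = gmas_rhs m r y ty trho trho' kap (\<lambda>l. Wx (hi l)) x s"
      unfolding Wx_def using Mrhs[OF xpos] by blast
    have ktg: "\<And>s. gmas_rhs m r y ty trho trho' kap kt x s = gmas_rhs m r y ty trho trho' kap (\<lambda>l. W' (hi l)) x s"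
      by (rule gmas_cong) (simp add: kt_eq)
    have fin: "\<And>Wa. sp Wa \<Longrightarrow> (\<forall>s<m. gmas_rhs m r y ty trho trho' kap (\<lambda>l. Wa (hi l)) x s = 0) \<Longrightarrow>
        \<forall>i<r. Wx i = W' i"
    proof (intro allI impI)
      fix Wa i assume Wa: "sp Wa" and zero: "\<forall>s<m. gmas_rhs m r y ty trho trho' kap (\<lambda>l. Wa (hi l)) x s = 0"
        and i: "i < r"
      have bal: "\<forall>j. (\<Sum>l\<in>{l. l < r \<and> trho l = j}. Wa (hi l)) * z x j =
         (\<Sum>l\<in>{l. l < r \<and> trho' l = j}. Wa (hi l) * z x (trho l))"
        unfolding z_def using bal_of_zero[OF cr defic0 zero] by blast
      show "Wx i = W' i"
      proof (cases "i \<in> Imp")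
        case True
        have "pm m x (e i) = adj Wa i" by (rule KL[OF Wa xpos bal True])
        also have "\<dots> = adj k i" by (rule adjinv[OF Wa True])
        finally show ?thesis unfolding Wx_def W'_def using True by (simp add: mult.commute)
      next
        case False
        then show ?thesis unfolding Wx_def W'_def using eprop[OF i False] pm_zero by simp
      qed
    qed
    have sameg: "\<And>s. (\<forall>i<r. Wx i = W' i) \<Longrightarrow> gmas_rhs m r y ty trho trho' kap (\<lambda>l. Wx (hi l)) x s =
        gmas_rhs m r y ty trho trho' kap (\<lambda>l. W' (hi l)) x s"
      by (rule gmas_cong) (use hi1 in simp)
    show "(\<forall>s<m. gmas_rhs m r y ty trho trho' kap kt x s = 0) \<longleftrightarrow> (\<forall>s<m. mas_rhs m r y rho rho' k x s = 0)"
    proof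
      assume z0: "\<forall>s<m. gmas_rhs m r y ty trho trho' kap kt x s = 0"
      then have "\<forall>s<m. gmas_rhs m r y ty trho trho' kap (\<lambda>l. W' (hi l)) x s = 0" using ktg by simp
      then have eqW: "\<forall>i<r. Wx i = W' i" by (rule fin[OF W'sp])
      show "\<forall>s<m. mas_rhs m r y rho rho' k x s = 0"
        using M sameg[OF eqW] ktg z0 by simp
    next
      assume z0: "\<forall>s<m. mas_rhs m r y rho rho' k x s = 0"
      then have "\<forall>s<m. gmas_rhs m r y ty trho trho' kap (\<lambda>l. Wx (hi l)) x s = 0" using M by simp
      then have eqW: "\<forall>i<r. Wx i = W' i" by (rule fin[OF Wxsp])
      show "\<forall>s<m. gmas_rhs m r y ty trho trho' kap kt x s = 0"
        using M sameg[OF eqW] ktg z0 by simp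
    qed
  qed
  show ?thesis unfolding pos_steady_states_def kt_def[symmetric]
    by (rule Collect_cong) (use main in blast)
qed

end
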